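(* Consider the model described in the context and suppose the Lipschitz assumption holds. Let $Q$ map each point $z\in\mathbb R^{\mathcal X}$ to a nearest point of $\mathcal Q_n$, i.e. $Q(z)\in\arg\min_{\hat z\in\mathcal Q_n}\|z-\hat z\|_\infty$. Define $\tilde V_{T+1}(\hat z):=0$ for $\hat z\in\mathcal Q_n$ and, for $t=T,\dots,1$ and $\hat z\in\mathcal Q_n$, $$\tilde V_t(\hat z):=\min_{\gamma\in\mathcal G}\Big(\hat c_t(\hat z,\gamma)+\tilde V_{t+1}\big(Q(\hat f_t(\hat z,\gamma))\big)\Big).$$ Let $\psi_t(\hat z)$ be any minimizer of this right-hand side, let $\hat z_1=Q(\mathbb P(x_1=\cdot))$ and $\hat z_{t+1}=Q(\hat f_t(\hat z_t,\psi_t(\hat z_t)))$, and define the fully decentralized strategy $\mathbf g=\{g_t\}_{t=1}^T$ with $u^i_t=g_t(x^i_t)$, $g_t(x):=\psi_t(\hat z_t)(x)$. Then $|J(\mathbf g)-J^\ast|\le\epsilon(n)$ for some $\epsilon(n)\in\mathcal O(1/\sqrt n)$.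
   Context: Fix $n\in\mathbb N$ agents, a horizon $T\in\mathbb N$, finite sets $\mathcal X,\mathcal U,\mathcal W$; $\mathbb N_k=\{1,\dots,k\}$. Let $\mathcal I(\mathcal X)=[0,1]^{\mathcal X}$, $\Delta(\mathcal X)$ the probability vectors on $\mathcal X$, $\mathcal M_n=\{m\in\Delta(\mathcal X): m(x)\in\{0,\tfrac1n,\dots,1\}\}$, and $\mathcal Q_n=\{0,\tfrac1n,\dots,1\}^{\mathcal X}$. Agent $i\in\mathbb N_n$ has state $x^i_t\in\mathcal X$, action $u^i_t\in\mathcal U$; mean-field $m_t(x)=\frac1n\sum_i\mathbb 1(x^i_t=x)$. Dynamics $x^i_{t+1}=f_t(x^i_t,u^i_t,w^i_t,m_t)$, $f_t:\mathcal X\times\mathcal U\times\mathcal W\times\mathcal I(\mathcal X)\to\mathcal X$. Initial states i.i.d. with law $\mathbb P(x_1=\cdot)$; for each $t$ the noises $w^1_t,\dots,w^n_t$ are i.i.d. with law $\mathbb P(w_t=\cdot)$; initial states and all noises mutually independent. $\mathbb P(y|x,u,z)=\sum_w\mathbb 1(f_t(x,u,w,z)=y)\mathbb P(w_t=w)$. Costs $\ell_t:\mathcal X\times\mathcal U\times\mathcal I(\mathcal X)\to\mathbb R_{\ge0}$. Lipschitz assumption: constants $K^1_t,K^2_t>0$ with $|\mathbb P(y|x,u,z_1)-\mathbb P(y|x,u,z_2)|\le K^1_t\|z_1-z_2\|_\infty$, $|\ell_t(x,u,z_1)-\ell_t(x,u,z_2)|\le K^2_t\|z_1-z_2\|_\infty$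 for all $x,y,u$, $z_1,z_2\in\mathcal I(\mathcal X)$. Cost of a strategy: $J=\mathbb E[\sum_{t=1}^T\frac1n\sum_i\ell_t(x^i_t,u^i_t,m_t)]$. $J^\ast$ is the optimal cost over mean-field sharing strategies $u^i_t=g_t(x^i_t,m_t)$, $g_t:\mathcal X\times\mathcal M_n\to\mathcal U$. $\mathcal G$ is the set of maps $\gamma:\mathcal X\to\mathcal U$; $\hat f_t(z,\gamma)(y)=\sum_x z(x)\mathbb P(y|x,\gamma(x),z)$, $\hat c_t(z,\gamma)=\sum_x z(x)\ell_t(x,\gamma(x),z)$. Model data do not depend on $n$; $\mathcal O(1/\sqrt n)$ means bounded by $C/\sqrt n$ with $C$ independent of $n$. *)

theory Defs
  imports "HOL-Probability.Probability"
begin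

text \<open>States, actions, noises are finite types 'x, 'u, 'w.
  Elements of R^X (and I(X), Delta(X)) are functions 'x => real. Time indices are 1..T.
  Agents are indexed by 0..<n; a joint state is a function nat => 'x (values outside
  0..<n are irrelevant and fixed to undefined).\<close>

definition linf :: "('x::finite \<Rightarrow> real) \<Rightarrow> real" where
  "linf z = Max (range (\<lambda>x. \<bar>z x\<bar>))"

definition Iset :: "('x \<Rightarrow> real) set" where
  "Iset = {z. \<forall>x. 0 \<le> z x \<and> z x \<le> 1}"

definition Qn :: "nat \<Rightarrow> ('x \<Rightarrow> real) set" where
  "Qn n = {z. \<forall>x. \<exists>k::nat. k \<le> n \<and> z x = real k / real n}"

definition mfield :: "nat \<Rightarrow> (nat \<Rightarrow> 'x) \<Rightarrow> ('x \<Rightarrow> real)" where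
  "mfield n xs = (\<lambda>x. real (card {i\<in>{..<n}. xs i = x}) / real n)"

definition Ptr :: "(nat \<Rightarrow> 'x \<Rightarrow> 'u \<Rightarrow> 'w \<Rightarrow> ('x \<Rightarrow> real) \<Rightarrow> 'x) \<Rightarrow> (nat \<Rightarrow> 'w::finite pmf)
    \<Rightarrow> nat \<Rightarrow> 'x \<Rightarrow> 'u \<Rightarrow> ('x \<Rightarrow> real) \<Rightarrow> 'x \<Rightarrow> real" where
  "Ptr f pw t x u z y = (\<Sum>w\<in>UNIV. (if f t x u w z = y then 1 else 0) * pmf (pw t) w)"

definition fhat :: "(nat \<Rightarrow> 'x \<Rightarrow> 'u \<Rightarrow> 'w \<Rightarrow> ('x \<Rightarrow> real) \<Rightarrow> 'x) \<Rightarrow> (nat \<Rightarrow> 'w::finite pmf)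
    \<Rightarrow> nat \<Rightarrow> ('x::finite \<Rightarrow> real) \<Rightarrow> ('x \<Rightarrow> 'u) \<Rightarrow> ('x \<Rightarrow> real)" where
  "fhat f pw t z \<gamma> = (\<lambda>y. \<Sum>x\<in>UNIV. z x * Ptr f pw t x (\<gamma> x) z y)"

definition chat :: "(nat \<Rightarrow> 'x \<Rightarrow> 'u \<Rightarrow> ('x \<Rightarrow> real) \<Rightarrow> real)
    \<Rightarrow> nat \<Rightarrow> ('x::finite \<Rightarrow> real) \<Rightarrow> ('x \<Rightarrow> 'u) \<Rightarrow> real" where
  "chat l t z \<gamma> = (\<Sum>x\<in>UNIV. z x * l t x (\<gamma> x) z)"

text \<open>Law of the joint state. sdist ... k is the law of (x^i_{k+1})_{i<n} under the
  mean-field sharing strategy g (u^i_t = g t (x^i_t) m_t).\<close>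
fun sdist :: "nat \<Rightarrow> 'x pmf \<Rightarrow> (nat \<Rightarrow> 'w pmf) \<Rightarrow> (nat \<Rightarrow> 'x \<Rightarrow> 'u \<Rightarrow> 'w \<Rightarrow> ('x \<Rightarrow> real) \<Rightarrow> 'x)
    \<Rightarrow> (nat \<Rightarrow> 'x \<Rightarrow> ('x \<Rightarrow> real) \<Rightarrow> 'u) \<Rightarrow> nat \<Rightarrow> (nat \<Rightarrow> 'x) pmf" where
  "sdist n p1 pw f g 0 = Pi_pmf {..<n} undefined (\<lambda>_. p1)"
| "sdist n p1 pw f g (Suc k) =
     bind_pmf (sdist n p1 pw f g k) (\<lambda>xs.
       map_pmf (\<lambda>ws i. if i < n
                        then f (Suc k) (xs i) (g (Suc k) (xs i) (mfield n xs)) (ws i) (mfield n xs)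
                        else undefined)
               (Pi_pmf {..<n} undefined (\<lambda>_. pw (Suc k))))"

definition Jcost :: "nat \<Rightarrow> nat \<Rightarrow> 'x pmf \<Rightarrow> (nat \<Rightarrow> 'w pmf)
    \<Rightarrow> (nat \<Rightarrow> 'x \<Rightarrow> 'u \<Rightarrow> 'w \<Rightarrow> ('x \<Rightarrow> real) \<Rightarrow> 'x) \<Rightarrow> (nat \<Rightarrow> 'x \<Rightarrow> 'u \<Rightarrow> ('x \<Rightarrow> real) \<Rightarrow> real)
    \<Rightarrow> (nat \<Rightarrow> 'x \<Rightarrow> ('x \<Rightarrow> real) \<Rightarrow> 'u) \<Rightarrow> real" where
  "Jcost T n p1 pw f l g =
     (\<Sum>t\<in>{1..T}. measure_pmf.expectation (sdist n p1 pw f g (t - 1))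
        (\<lambda>xs. (1 / real n) * (\<Sum>i<n. l t (xs i) (g t (xs i) (mfield n xs)) (mfield n xs))))"

text \<open>Optimal cost over all mean-field sharing strategies u^i_t = g_t(x^i_t, m_t).\<close>
definition Jstar :: "nat \<Rightarrow> nat \<Rightarrow> 'x pmf \<Rightarrow> (nat \<Rightarrow> 'w pmf)
    \<Rightarrow> (nat \<Rightarrow> 'x \<Rightarrow> 'u \<Rightarrow> 'w \<Rightarrow> ('x \<Rightarrow> real) \<Rightarrow> 'x) \<Rightarrow> (nat \<Rightarrow> 'x \<Rightarrow> 'u \<Rightarrow> ('x \<Rightarrow> real) \<Rightarrow> real)
    \<Rightarrow> real" where
  "Jstar T n p1 pw f l = (INF g. Jcost T n p1 pw f l g)"

end

theory Submission
  imports Defs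
begin



lemma int_bdd: fixes F :: "'a \<Rightarrow> real"
  assumes "\<And>x. \<bar>F x\<bar> \<le> B" shows "integrable (measure_pmf p) F"
  by (rule measure_pmf.integrable_const_bound[where B=B]) (use assms in auto)

lemma exp_bind_bdd: fixes F :: "'b \<Rightarrow> real"
  assumes "\<And>x. \<bar>F x\<bar> \<le> B"
  shows "measure_pmf.expectation (bind_pmf M N) F =
         measure_pmf.expectation M (\<lambda>x. measure_pmf.expectation (N x) F)"
  unfolding measure_pmf_bind
  by (rule integral_bind[where K="count_space UNIV" and B=B and B'=1])
     (use assms in \<open>auto simp: measure_pmf.prob_space_axioms measurable_pmf_measure2 prob_space_imp_subprob_space
        measure_pmf_in_subprob_algebra
        intro!: measure_pmf.emeasure_space_le_1 measure_pmf.finite_measure_axioms\<close>)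

lemma exp_le_const: fixes F :: "'a \<Rightarrow> real"
  assumes "\<And>x. F x \<le> c" "\<And>x. \<bar>F x\<bar> \<le> B"
  shows "measure_pmf.expectation p F \<le> c"
proof -
  have "measure_pmf.expectation p F \<le> measure_pmf.expectation p (\<lambda>_. c)"
    by (rule integral_mono[OF int_bdd[OF assms(2)]]) (use assms in auto)
  also have "\<dots> = c" by simp
  finally show ?thesis .
qed

lemma exp_ge_const: fixes F :: "'a \<Rightarrow> real"
  assumes "\<And>x. c \<le> F x" "\<And>x. \<bar>F x\<bar> \<le> B"
  shows "c \<le> measure_pmf.expectation p F"
proof -
  have "measure_pmf.expectation p (\<lambda>_. c) \<le> measure_pmf.expectation p F"
    by (rule integral_mono[OF _ int_bdd[OF assms(2)]]) (use assms in auto)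
  then show ?thesis by simp
qed

lemma sq_le1: fixes a :: real assumes "\<bar>a\<bar> \<le> 1" shows "a * a \<le> 1" "\<bar>a * a\<bar> \<le> 1"
proof -
  have "\<bar>a\<bar> * \<bar>a\<bar> \<le> 1" by (rule mult_le_one) (use assms in auto)
  then show "a * a \<le> 1" "\<bar>a * a\<bar> \<le> 1" by (simp_all add: abs_mult)
qed

lemma conc_sq:
  fixes q :: "nat \<Rightarrow> 'a pmf" and b :: "nat \<Rightarrow> 'a \<Rightarrow> real"
  assumes b0: "\<And>i x. 0 \<le> b i x" and b1: "\<And>i x. b i x \<le> 1"
  shows "measure_pmf.expectation (Pi_pmf {..<n} d q)
           (\<lambda>ws. (\<Sum>i<n. b i (ws i) - measure_pmf.expectation (q i) (b i))^2) \<le> real n"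
proof -
  define P where "P = Pi_pmf {..<n} d q"
  define p where "p i = measure_pmf.expectation (q i) (b i)" for i
  have bb: "\<bar>b i x\<bar> \<le> 1" for i x using b0[of i x] b1[of i x] by (simp add: abs_le_iff)
  have p0: "0 \<le> p i" for i unfolding p_def by (rule exp_ge_const[OF b0 bb])
  have p1: "p i \<le> 1" for i unfolding p_def by (rule exp_le_const[OF b1 bb])
  have comp: "measure_pmf.expectation P (\<lambda>ws. h (ws i)) = measure_pmf.expectation (q i) h"
    if "i < n" for i and h :: "'a \<Rightarrow> real"
  proof -
    have "measure_pmf.expectation P (\<lambda>ws. h (ws i)) = measure_pmf.expectation (map_pmf (\<lambda>f. f i) P) h"
      by simp
    also have "map_pmf (\<lambda>f. f i) P = q i" using Pi_pmf_component[of "{..<n}" i d q] that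
      by (simp add: P_def)
    finally show ?thesis .
  qed
  have cross: "measure_pmf.expectation P (\<lambda>ws. b i (ws i) * b j (ws j)) = p i * p j"
    if ij: "i < n" "j < n" "i \<noteq> j" for i j
  proof -
    define F where "F k = (if k = i then b i else if k = j then b j else (\<lambda>_. 1::real))" for k
    have eq: "(\<Prod>k\<in>{..<n}. F k (ws k)) = b i (ws i) * b j (ws j)" for ws
    proof -
      have "(\<Prod>k\<in>{..<n}. F k (ws k)) = (\<Prod>k\<in>{i,j}. F k (ws k))"
        by (rule prod.mono_neutral_right) (use ij in \<open>auto simp: F_def\<close>)
      then show ?thesis using ij by (simp add: F_def)
    qed
    have eq2: "(\<Prod>k\<in>{..<n}. measure_pmf.expectation (q k) (F k)) = p i * p j"
    proof -
      have "(\<Prod>k\<in>{..<n}. measure_pmf.expectation (q k) (F k)) =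
            (\<Prod>k\<in>{i,j}. measure_pmf.expectation (q k) (F k))"
        by (rule prod.mono_neutral_right) (use ij in \<open>auto simp: F_def\<close>)
      then show ?thesis using ij by (simp add: F_def p_def)
    qed
    have "measure_pmf.expectation P (\<lambda>ws. \<Prod>k\<in>{..<n}. F k (ws k)) =
          (\<Prod>k\<in>{..<n}. measure_pmf.expectation (q k) (\<lambda>v. F k v))"
      unfolding P_def
      by (rule expectation_prod_Pi_pmf) (auto simp: F_def b0 intro: int_bdd[OF bb])
    then show ?thesis using eq eq2 by simp
  qed
  have term_le: "measure_pmf.expectation P (\<lambda>ws. (b i (ws i) - p i) * (b j (ws j) - p j))
               \<le> (if i = j then 1 else 0)" if ij: "i < n" "j < n" for i j
  proof (cases "i = j")
    case True
    have "\<bar>b i x - p i\<bar> \<le> 1" for x using b0[of i x] b1[of i x] p0[of i] p1[of i] by linarith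
    then have le: "(b i x - p i) * (b i x - p i) \<le> 1" "\<bar>(b i x - p i) * (b i x - p i)\<bar> \<le> 1" for x
      by (simp_all add: sq_le1)
    have "measure_pmf.expectation P (\<lambda>ws. (b i (ws i) - p i) * (b i (ws i) - p i)) \<le> 1"
      by (rule exp_le_const) (use le in auto)
    then show ?thesis using True by simp
  next
    case False
    have i1: "integrable P (\<lambda>ws. b i (ws i) * b j (ws j))"
      by (rule int_bdd[where B=1]) (simp add: abs_mult mult_le_one bb)
    have i2: "integrable P (\<lambda>ws. b k (ws k))" for k by (rule int_bdd[OF bb])
    have "(\<lambda>ws. (b i (ws i) - p i) * (b j (ws j) - p j)) =
          (\<lambda>ws. b i (ws i) * b j (ws j) - p i * b j (ws j) - p j * b i (ws i) + p i * p j)"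
      by (auto simp: algebra_simps)
    then have "measure_pmf.expectation P (\<lambda>ws. (b i (ws i) - p i) * (b j (ws j) - p j)) =
       measure_pmf.expectation P (\<lambda>ws. b i (ws i) * b j (ws j)) - p i * measure_pmf.expectation P (\<lambda>ws. b j (ws j))
        - p j * measure_pmf.expectation P (\<lambda>ws. b i (ws i)) + p i * p j"
      using i1 i2 by simp
    also have "\<dots> = 0" using cross[OF ij False] comp[OF ij(1)] comp[OF ij(2)] by (simp add: p_def)
    finally show ?thesis using False by simp
  qed
  have sq: "(\<Sum>i<n. b i (ws i) - p i)^2 = (\<Sum>i<n. \<Sum>j<n. (b i (ws i) - p i) * (b j (ws j) - p j))" for ws
    by (simp add: power2_eq_square sum_product)
  have "measure_pmf.expectation P (\<lambda>ws. (\<Sum>i<n. b i (ws i) - p i)^2) =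
        (\<Sum>i<n. \<Sum>j<n. measure_pmf.expectation P (\<lambda>ws. (b i (ws i) - p i) * (b j (ws j) - p j)))"
  proof -
    have ii: "integrable P (\<lambda>ws. (b i (ws i) - p i) * (b j (ws j) - p j))" for i j
    proof (rule int_bdd[where B=1])
      fix ws
      have "\<bar>b k (ws k) - p k\<bar> \<le> 1" for k using b0[of k "ws k"] b1[of k "ws k"] p0[of k] p1[of k] by linarith
      then show "\<bar>(b i (ws i) - p i) * (b j (ws j) - p j)\<bar> \<le> 1" by (simp add: abs_mult mult_le_one)
    qed
    show ?thesis unfolding sq
      by (subst Bochner_Integration.integral_sum) (auto intro!: Bochner_Integration.integrable_sum ii sum.cong
            Bochner_Integration.integral_sum)
  qed
  also have "\<dots> \<le> (\<Sum>i<n. \<Sum>j<n. (if i = j then 1 else 0))"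
    by (intro sum_mono term_le) auto
  also have "\<dots> = real n" by simp
  finally show ?thesis by (simp add: P_def p_def)
qed

lemma conc_abs:
  fixes q :: "nat \<Rightarrow> 'a pmf" and b :: "nat \<Rightarrow> 'a \<Rightarrow> real"
  assumes b0: "\<And>i x. 0 \<le> b i x" and b1: "\<And>i x. b i x \<le> 1"
  shows "measure_pmf.expectation (Pi_pmf {..<n} d q)
           (\<lambda>ws. \<bar>\<Sum>i<n. b i (ws i) - measure_pmf.expectation (q i) (b i)\<bar>) \<le> sqrt (real n)"
proof -
  define P where "P = Pi_pmf {..<n} d q"
  define S where "S ws = (\<Sum>i<n. b i (ws i) - measure_pmf.expectation (q i) (b i))" for ws
  have bb: "\<bar>b i x\<bar> \<le> 1" for i x using b0[of i x] b1[of i x] by (simp add: abs_le_iff)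
  have pb: "\<bar>measure_pmf.expectation (q i) (b i)\<bar> \<le> 1" for i
    using exp_le_const[OF b1 bb, of "q i"] exp_ge_const[OF b0 bb, of "q i"] by simp
  have Sb: "\<bar>S ws\<bar> \<le> 2 * real n" for ws
  proof -
    have "\<bar>S ws\<bar> \<le> (\<Sum>i<n. \<bar>b i (ws i) - measure_pmf.expectation (q i) (b i)\<bar>)"
      unfolding S_def by (rule sum_abs)
    also have "\<dots> \<le> (\<Sum>i<n. 2)"
    proof (intro sum_mono)
      fix i
      have "\<bar>b i (ws i) - measure_pmf.expectation (q i) (b i)\<bar> \<le> \<bar>b i (ws i)\<bar> + \<bar>measure_pmf.expectation (q i) (b i)\<bar>"
        by (rule abs_triangle_ineq4)
      then show "\<bar>b i (ws i) - measure_pmf.expectation (q i) (b i)\<bar> \<le> 2" using bb[of i "ws i"] pb[of i] by linarith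
    qed
    finally show ?thesis by simp
  qed
  have i1: "integrable P (\<lambda>ws. \<bar>S ws\<bar>)" by (rule int_bdd[where B="2*real n"]) (simp add: Sb)
  have i2: "integrable P (\<lambda>ws. (\<bar>S ws\<bar>)\<^sup>2)"
  proof (rule int_bdd[where B="(2*real n)^2"])
    fix ws
    have "\<bar>S ws\<bar>^2 \<le> (2*real n)^2" by (rule power_mono[OF Sb]) simp
    then show "\<bar>(\<bar>S ws\<bar>)\<^sup>2\<bar> \<le> (2*real n)^2" by simp
  qed
  have "0 \<le> measure_pmf.variance P (\<lambda>ws. \<bar>S ws\<bar>)" by (rule measure_pmf.variance_positive)
  also have "measure_pmf.variance P (\<lambda>ws. \<bar>S ws\<bar>) =
     measure_pmf.expectation P (\<lambda>ws. (\<bar>S ws\<bar>)\<^sup>2) - (measure_pmf.expectation P (\<lambda>ws. \<bar>S ws\<bar>))\<^sup>2"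
    by (rule measure_pmf.variance_eq[OF i1 i2])
  finally have "(measure_pmf.expectation P (\<lambda>ws. \<bar>S ws\<bar>))\<^sup>2 \<le> measure_pmf.expectation P (\<lambda>ws. (S ws)\<^sup>2)"
    by simp
  also have "\<dots> \<le> real n" unfolding P_def S_def by (rule conc_sq[OF b0 b1])
  finally have "(measure_pmf.expectation P (\<lambda>ws. \<bar>S ws\<bar>))\<^sup>2 \<le> real n" .
  then have "measure_pmf.expectation P (\<lambda>ws. \<bar>S ws\<bar>) \<le> sqrt (real n)"
    by (simp add: real_le_rsqrt)
  then show ?thesis by (simp add: P_def S_def)
qed

lemma linf_ge: "\<bar>z y\<bar> \<le> linf (z::'x::finite \<Rightarrow> real)"
  unfolding linf_def by (rule Max_ge) auto

lemma linf_le: "(\<And>y. \<bar>z y\<bar> \<le> c) \<Longrightarrow> linf (z::'x::finite \<Rightarrow> real) \<le> c"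
  unfolding linf_def by (subst Max_le_iff) auto

lemma linf_nonneg: "0 \<le> linf (z::'x::finite \<Rightarrow> real)"
  using linf_ge[of z undefined] by simp

lemma linf_le_sum: "linf (z::'x::finite \<Rightarrow> real) \<le> (\<Sum>y\<in>UNIV. \<bar>z y\<bar>)"
  by (rule linf_le) (rule member_le_sum, auto)

lemma card_sum: "finite A \<Longrightarrow> real (card {i\<in>A. P i}) = (\<Sum>i\<in>A. if P i then 1 else 0)"
proof -
  assume "finite A"
  have "{i\<in>A. P i} = A \<inter> Collect P" by auto
  then show ?thesis using \<open>finite A\<close> by (simp add: sum.If_cases)
qed

lemma conc_emp:
  fixes q :: "nat \<Rightarrow> 'a pmf" and \<phi> :: "nat \<Rightarrow> 'a \<Rightarrow> 'x::finite"
  assumes n: "n \<ge> 1"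
  shows "measure_pmf.expectation (Pi_pmf {..<n} d q)
     (\<lambda>ws. linf (\<lambda>y. real (card {i\<in>{..<n}. \<phi> i (ws i) = y}) / real n
        - (\<Sum>i<n. measure_pmf.expectation (q i) (\<lambda>w. if \<phi> i w = y then 1 else 0)) / real n))
     \<le> real CARD('x) / sqrt (real n)"
proof -
  define P where "P = Pi_pmf {..<n} d q"
  define b where "b y i = (\<lambda>w. if \<phi> i w = y then 1 else 0::real)" for y i
  define D where "D ws y = \<bar>\<Sum>i<n. b y i (ws i) - measure_pmf.expectation (q i) (b y i)\<bar>" for ws y
  define e where "e ws = (\<lambda>y. real (card {i\<in>{..<n}. \<phi> i (ws i) = y}) / real n
        - (\<Sum>i<n. measure_pmf.expectation (q i) (\<lambda>w. if \<phi> i w = y then 1 else 0)) / real n)" for ws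
  have eqD: "\<bar>e ws y\<bar> = D ws y / real n" for ws y
  proof -
    have "real (card {i\<in>{..<n}. \<phi> i (ws i) = y}) = (\<Sum>i<n. b y i (ws i))"
      using card_sum[of "{..<n}" "\<lambda>i. \<phi> i (ws i) = y"] by (simp add: b_def)
    moreover have "(\<Sum>i<n. measure_pmf.expectation (q i) (\<lambda>w. if \<phi> i w = y then 1 else 0))
       = (\<Sum>i<n. measure_pmf.expectation (q i) (b y i))" by (simp add: b_def)
    ultimately have "e ws y = (\<Sum>i<n. b y i (ws i) - measure_pmf.expectation (q i) (b y i)) / real n"
      unfolding e_def by (simp add: sum_subtractf diff_divide_distrib)
    then show ?thesis using n by (simp add: D_def)
  qed
  have Db: "\<bar>D ws y\<bar> \<le> 2 * real n" for ws y
  proof -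
    have bb: "\<bar>b y i x\<bar> \<le> 1" for i x by (simp add: b_def)
    have pb: "\<bar>measure_pmf.expectation (q i) (b y i)\<bar> \<le> 1" for i
    proof -
      have "measure_pmf.expectation (q i) (b y i) \<le> 1" by (rule exp_le_const[of _ 1 1]) (simp_all add: b_def)
      moreover have "0 \<le> measure_pmf.expectation (q i) (b y i)" by (rule exp_ge_const[of 0 _ 1]) (simp_all add: b_def)
      ultimately show ?thesis by simp
    qed
    have "\<bar>D ws y\<bar> \<le> (\<Sum>i<n. \<bar>b y i (ws i) - measure_pmf.expectation (q i) (b y i)\<bar>)"
      unfolding D_def by (simp add: sum_abs)
    also have "\<dots> \<le> (\<Sum>i<n. 2)"
    proof (intro sum_mono)
      fix i
      have "\<bar>b y i (ws i) - measure_pmf.expectation (q i) (b y i)\<bar> \<le> \<bar>b y i (ws i)\<bar> + \<bar>measure_pmf.expectation (q i) (b y i)\<bar>"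
        by (rule abs_triangle_ineq4)
      then show "\<bar>b y i (ws i) - measure_pmf.expectation (q i) (b y i)\<bar> \<le> 2" using bb[of i "ws i"] pb[of i] by linarith
    qed
    finally show ?thesis by simp
  qed
  have le1: "linf (e ws) \<le> (\<Sum>y\<in>UNIV. D ws y / real n)" for ws
  proof -
    have "linf (e ws) \<le> (\<Sum>y\<in>UNIV. \<bar>e ws y\<bar>)" by (rule linf_le_sum)
    also have "\<dots> = (\<Sum>y\<in>UNIV. D ws y / real n)" by (simp add: eqD)
    finally show ?thesis .
  qed
  have le2: "(\<Sum>y\<in>UNIV. D ws y / real n) \<le> (\<Sum>y\<in>(UNIV::'x set). 2 * real n / real n)" for ws
    by (intro sum_mono divide_right_mono) (use Db in \<open>auto simp: abs_le_iff\<close>)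
  have "measure_pmf.expectation P (\<lambda>ws. linf (e ws))
     \<le> measure_pmf.expectation P (\<lambda>ws. \<Sum>y\<in>UNIV. D ws y / real n)"
  proof (rule integral_mono)
    show "integrable P (\<lambda>ws. \<Sum>y\<in>UNIV. D ws y / real n)"
      by (intro Bochner_Integration.integrable_sum Bochner_Integration.integrable_divide int_bdd[OF Db])
    show "integrable P (\<lambda>ws. linf (e ws))"
    proof (rule int_bdd[where B="\<Sum>y\<in>(UNIV::'x set). 2 * real n / real n"])
      fix ws
      show "\<bar>linf (e ws)\<bar> \<le> (\<Sum>y\<in>(UNIV::'x set). 2 * real n / real n)"
        using linf_nonneg[of "e ws"] le1[of ws] le2[of ws] by simp
    qed
  qed (rule le1)
  also have "\<dots> = (\<Sum>y\<in>UNIV. measure_pmf.expectation P (\<lambda>ws. D ws y) / real n)"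
    by (subst Bochner_Integration.integral_sum)
       (auto intro!: Bochner_Integration.integrable_divide int_bdd[OF Db])
  also have "\<dots> \<le> (\<Sum>y\<in>(UNIV::'x set). sqrt (real n) / real n)"
  proof (intro sum_mono divide_right_mono)
    fix y
    show "measure_pmf.expectation P (\<lambda>ws. D ws y) \<le> sqrt (real n)"
      unfolding P_def D_def by (rule conc_abs) (auto simp: b_def)
  qed auto
  also have "\<dots> = real CARD('x) / sqrt (real n)"
  proof -
    have s: "sqrt (real n) * sqrt (real n) = real n" by simp
    have p: "sqrt (real n) > 0" "real n > 0" using n by simp_all
    have "sqrt (real n) / real n = 1 / sqrt (real n)"
      using p by (simp add: field_simps s)
    then show ?thesis by simp
  qed
  finally show ?thesis by (simp add: P_def e_def)
qed




lemma exists_le_exp: fixes F :: "'a \<Rightarrow> real"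
  assumes bd: "\<And>x. \<bar>F x\<bar> \<le> B" and le: "measure_pmf.expectation p F \<le> c"
  shows "\<exists>x. F x \<le> c"
proof (rule ccontr)
  assume "\<not> ?thesis"
  then have "\<forall>x. c < F x" by (meson not_le)
  then have "measure_pmf.expectation p (\<lambda>_. c) < measure_pmf.expectation p F"
    by (intro measure_pmf.integral_less_AE_space) (auto intro: int_bdd[OF bd] simp: measure_pmf.emeasure_space_1)
  with le show False by simp
qed

lemma linf_sym: "linf ((a::'x::finite \<Rightarrow> real) - b) = linf (b - a)"
  by (simp add: linf_def fun_diff_def abs_minus_commute)

lemma linf_tri: "linf ((a::'x::finite \<Rightarrow> real) - c) \<le> linf (a - b) + linf (b - c)"
proof (rule linf_le)
  fix y
  have "\<bar>a y - c y\<bar> \<le> \<bar>a y - b y\<bar> + \<bar>b y - c y\<bar>" by simp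
  also have "\<dots> \<le> linf (a - b) + linf (b - c)"
    using linf_ge[of "a - b" y] linf_ge[of "b - c" y] by (simp add: fun_diff_def)
  finally show "\<bar>(a - c) y\<bar> \<le> linf (a - b) + linf (b - c)" by (simp add: fun_diff_def)
qed

lemma linf_Iset: "a \<in> Iset \<Longrightarrow> b \<in> Iset \<Longrightarrow> linf ((a::'x::finite \<Rightarrow> real) - b) \<le> 1"
  by (rule linf_le) (auto simp: Iset_def fun_diff_def abs_le_iff, (smt (verit))+)

lemma Qn_Iset: "n \<ge> 1 \<Longrightarrow> z \<in> Qn n \<Longrightarrow> z \<in> Iset"
proof -
  assume n: "n \<ge> 1" and z: "z \<in> Qn n"
  show "z \<in> Iset" unfolding Iset_def
  proof (intro CollectI allI conjI)
    fix x
    obtain k :: nat where k: "k \<le> n" "z x = real k / real n" using z by (auto simp: Qn_def)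
    show "0 \<le> z x" using k by simp
    show "z x \<le> 1" using k n by (simp add: divide_le_eq_1)
  qed
qed

lemma mfield_Qn: "mfield n xs \<in> Qn n"
proof -
  have "card {i\<in>{..<n}. xs i = x} \<le> n" for x
    using card_mono[of "{..<n}" "{i\<in>{..<n}. xs i = x}"] by auto
  then show ?thesis unfolding Qn_def mfield_def by blast
qed

lemma mfield_Iset: "n \<ge> 1 \<Longrightarrow> mfield n xs \<in> Iset"
  using Qn_Iset mfield_Qn by blast

lemma count_sum: fixes h :: "'x::finite \<Rightarrow> real" and n :: nat
  shows "(\<Sum>i<n. h (xs i)) = (\<Sum>x\<in>UNIV. real (card {i\<in>{..<n}. xs i = x}) * h x)"
proof -
  have "(\<Sum>i<n. h (xs i)) = (\<Sum>i<n. \<Sum>x\<in>UNIV. if xs i = x then h x else 0)"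
    by simp
  also have "\<dots> = (\<Sum>x\<in>UNIV. \<Sum>i<n. if xs i = x then h x else 0)" by (rule sum.swap)
  also have "\<dots> = (\<Sum>x\<in>UNIV. real (card {i\<in>{..<n}. xs i = x}) * h x)"
  proof (rule sum.cong[OF refl])
    fix x
    have "(\<Sum>i<n. if xs i = x then h x else 0) = (\<Sum>i<n. (if xs i = x then 1 else 0) * h x)"
      by (rule sum.cong) auto
    also have "\<dots> = real (card {i\<in>{..<n}. xs i = x}) * h x"
    proof -
      have c: "(\<Sum>i<n. (if xs i = x then 1 else 0)) = real (card {i\<in>{..<n}. xs i = x})"
        using card_sum[OF finite_lessThan[of n], of "\<lambda>i. xs i = x"] by (rule sym)
      show ?thesis by (simp only: sum_distrib_right[symmetric] c)
    qed
    finally show "(\<Sum>i<n. if xs i = x then h x else 0) = real (card {i\<in>{..<n}. xs i = x}) * h x" .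
  qed
  finally show ?thesis .
qed

lemma mfield_avg: fixes h :: "'x::finite \<Rightarrow> real" and n :: nat
  shows "(\<Sum>i<n. h (xs i)) / real n = (\<Sum>x\<in>UNIV. mfield n xs x * h x)"
  unfolding count_sum mfield_def by (simp add: sum_divide_distrib)

lemma Ptr_exp: "measure_pmf.expectation (pw t) (\<lambda>w. if f t x u w z = y then 1 else 0) = Ptr f pw t x u z y"
  unfolding Ptr_def by (subst integral_measure_pmf_real[where A=UNIV]) auto

lemma Ptr_nonneg: "0 \<le> Ptr f pw t x u z y"
  unfolding Ptr_def by (intro sum_nonneg) auto

lemma Ptr_le1: "Ptr f (pw :: nat \<Rightarrow> 'w::finite pmf) t x u z y \<le> 1"
proof -
  have "Ptr f pw t x u z y \<le> (\<Sum>w\<in>UNIV. pmf (pw t) w)"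
    unfolding Ptr_def by (intro sum_mono) auto
  also have "\<dots> = 1" by (rule sum_pmf_eq_1) auto
  finally show ?thesis .
qed

lemma pmf_exp: "measure_pmf.expectation p (\<lambda>w. if w = y then 1 else 0) = pmf p y"
  by (subst integral_measure_pmf_real[where A="{y}"]) (auto split: if_splits)




fun Lk :: "real \<Rightarrow> real \<Rightarrow> nat \<Rightarrow> real" where
  "Lk a c 0 = 0" | "Lk a c (Suc k) = a + 2 * c * Lk a c k"
fun Ek :: "real \<Rightarrow> real \<Rightarrow> real \<Rightarrow> nat \<Rightarrow> real" where
  "Ek a c x 0 = 0" | "Ek a c x (Suc k) = 4 * x * Lk a c k + 2 * Ek a c x k"
fun Dk :: "real \<Rightarrow> real \<Rightarrow> nat \<Rightarrow> real" where
  "Dk x c 0 = 2 * x" | "Dk x c (Suc k) = 2 * (x + c * Dk x c k)"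

lemma Lk_nonneg: "0 \<le> a \<Longrightarrow> 0 \<le> c \<Longrightarrow> 0 \<le> Lk a c k"
  by (induction k) auto
lemma Ek_nonneg: "0 \<le> a \<Longrightarrow> 0 \<le> c \<Longrightarrow> 0 \<le> x \<Longrightarrow> 0 \<le> Ek a c x k"
  by (induction k) (auto intro!: add_nonneg_nonneg mult_nonneg_nonneg Lk_nonneg)

locale mf =
  fixes T :: nat and p1 :: "'x::finite pmf" and pw :: "nat \<Rightarrow> 'w::finite pmf"
    and f :: "nat \<Rightarrow> 'x \<Rightarrow> 'u::finite \<Rightarrow> 'w \<Rightarrow> ('x \<Rightarrow> real) \<Rightarrow> 'x"
    and l :: "nat \<Rightarrow> 'x \<Rightarrow> 'u \<Rightarrow> ('x \<Rightarrow> real) \<Rightarrow> real" and K B :: real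
  assumes Kpos: "K > 0" and Bnn: "B \<ge> 0"
    and lnn: "\<And>t x u z. 0 \<le> l t x u z"
    and lipP: "\<And>t x y u z1 z2. t \<in> {1..T} \<Longrightarrow> z1 \<in> Iset \<Longrightarrow> z2 \<in> Iset \<Longrightarrow>
        \<bar>Ptr f pw t x u z1 y - Ptr f pw t x u z2 y\<bar> \<le> K * linf (z1 - z2)"
    and lipl: "\<And>t x u z1 z2. t \<in> {1..T} \<Longrightarrow> z1 \<in> Iset \<Longrightarrow> z2 \<in> Iset \<Longrightarrow>
        \<bar>l t x u z1 - l t x u z2\<bar> \<le> K * linf (z1 - z2)"
    and lB: "\<And>t x u z. t \<in> {1..T} \<Longrightarrow> z \<in> Iset \<Longrightarrow> l t x u z \<le> B"
begin

definition "Lc = real CARD('x) * (B + K)"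
definition "Lf = real CARD('x) * (1 + K)"

lemma Lc_nn: "0 \<le> Lc" unfolding Lc_def using Kpos Bnn by simp
lemma Lf_nn: "0 \<le> Lf" unfolding Lf_def using Kpos by simp

lemma chat_lip: assumes t: "t \<in> {1..T}" and z: "z1 \<in> Iset" "z2 \<in> Iset"
  shows "\<bar>chat l t z1 \<gamma> - chat l t z2 \<gamma>\<bar> \<le> Lc * linf (z1 - z2)"
proof -
  let ?d = "linf (z1 - z2)"
  have "\<bar>chat l t z1 \<gamma> - chat l t z2 \<gamma>\<bar> =
        \<bar>\<Sum>x\<in>UNIV. z1 x * l t x (\<gamma> x) z1 - z2 x * l t x (\<gamma> x) z2\<bar>"
    unfolding chat_def by (simp add: sum_subtractf)
  also have "\<dots> \<le> (\<Sum>x\<in>UNIV. \<bar>z1 x * l t x (\<gamma> x) z1 - z2 x * l t x (\<gamma> x) z2\<bar>)"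
    by (rule sum_abs)
  also have "\<dots> \<le> (\<Sum>x\<in>(UNIV::'x set). (B + K) * ?d)"
  proof (rule sum_mono)
    fix x
    have e: "z1 x * l t x (\<gamma> x) z1 - z2 x * l t x (\<gamma> x) z2 =
          (z1 x - z2 x) * l t x (\<gamma> x) z1 + z2 x * (l t x (\<gamma> x) z1 - l t x (\<gamma> x) z2)"
      by (simp add: algebra_simps)
    have d: "\<bar>z1 x - z2 x\<bar> \<le> ?d" using linf_ge[of "z1 - z2" x] by (simp add: fun_diff_def)
    have l1: "0 \<le> l t x (\<gamma> x) z1" "l t x (\<gamma> x) z1 \<le> B" using lnn lB[OF t z(1)] by auto
    have z2x: "0 \<le> z2 x" "z2 x \<le> 1" using z(2) by (auto simp: Iset_def)
    have ll: "\<bar>l t x (\<gamma> x) z1 - l t x (\<gamma> x) z2\<bar> \<le> K * ?d" by (rule lipl[OF t z])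
    have a1: "\<bar>(z1 x - z2 x) * l t x (\<gamma> x) z1\<bar> \<le> ?d * B"
      unfolding abs_mult using l1 d by (intro mult_mono) (auto simp: linf_nonneg)
    have a2: "\<bar>z2 x * (l t x (\<gamma> x) z1 - l t x (\<gamma> x) z2)\<bar> \<le> 1 * (K * ?d)"
      unfolding abs_mult using z2x ll by (intro mult_mono) auto
    show "\<bar>z1 x * l t x (\<gamma> x) z1 - z2 x * l t x (\<gamma> x) z2\<bar> \<le> (B + K) * ?d"
      unfolding e using a1 a2 abs_triangle_ineq[of "(z1 x - z2 x) * l t x (\<gamma> x) z1"
          "z2 x * (l t x (\<gamma> x) z1 - l t x (\<gamma> x) z2)"]
      by (simp add: algebra_simps)
  qed
  also have "\<dots> = Lc * ?d" by (simp add: Lc_def)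
  finally show ?thesis .
qed

lemma chat_bd: assumes t: "t \<in> {1..T}" and z: "z \<in> Iset"
  shows "0 \<le> chat l t z \<gamma>" "chat l t z \<gamma> \<le> real CARD('x) * B"
proof -
  have zx: "0 \<le> z x" "z x \<le> 1" for x using z by (auto simp: Iset_def)
  show "0 \<le> chat l t z \<gamma>" unfolding chat_def using zx lnn by (intro sum_nonneg mult_nonneg_nonneg) auto
  have "chat l t z \<gamma> \<le> (\<Sum>x\<in>(UNIV::'x set). 1 * B)"
    unfolding chat_def by (intro sum_mono mult_mono) (use zx lnn lB[OF t z] Bnn in auto)
  then show "chat l t z \<gamma> \<le> real CARD('x) * B" by simp
qed

lemma fhat_bd: assumes z: "z \<in> Iset"
  shows "0 \<le> fhat f pw t z \<gamma> y" "fhat f pw t z \<gamma> y \<le> real CARD('x)"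
proof -
  have zx: "0 \<le> z x" "z x \<le> 1" for x using z by (auto simp: Iset_def)
  show "0 \<le> fhat f pw t z \<gamma> y" unfolding fhat_def using zx Ptr_nonneg
    by (intro sum_nonneg mult_nonneg_nonneg) auto
  have "fhat f pw t z \<gamma> y \<le> (\<Sum>x\<in>(UNIV::'x set). 1 * 1)"
    unfolding fhat_def by (intro sum_mono mult_mono) (use zx Ptr_nonneg Ptr_le1 in auto)
  then show "fhat f pw t z \<gamma> y \<le> real CARD('x)" by simp
qed

lemma fhat_lip: assumes t: "t \<in> {1..T}" and z: "z1 \<in> Iset" "z2 \<in> Iset"
  shows "linf (fhat f pw t z1 \<gamma> - fhat f pw t z2 \<gamma>) \<le> Lf * linf (z1 - z2)"
proof (rule linf_le)
  fix y
  let ?d = "linf (z1 - z2)"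
  let ?P = "\<lambda>x z. Ptr f pw t x (\<gamma> x) z y"
  have "\<bar>(fhat f pw t z1 \<gamma> - fhat f pw t z2 \<gamma>) y\<bar> =
        \<bar>\<Sum>x\<in>UNIV. z1 x * ?P x z1 - z2 x * ?P x z2\<bar>"
    unfolding fhat_def by (simp add: sum_subtractf fun_diff_def)
  also have "\<dots> \<le> (\<Sum>x\<in>UNIV. \<bar>z1 x * ?P x z1 - z2 x * ?P x z2\<bar>)"
    by (rule sum_abs)
  also have "\<dots> \<le> (\<Sum>x\<in>(UNIV::'x set). (1 + K) * ?d)"
  proof (rule sum_mono)
    fix x
    have e: "z1 x * ?P x z1 - z2 x * ?P x z2 = (z1 x - z2 x) * ?P x z1 + z2 x * (?P x z1 - ?P x z2)"
      by (simp add: algebra_simps)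
    have d: "\<bar>z1 x - z2 x\<bar> \<le> ?d" using linf_ge[of "z1 - z2" x] by (simp add: fun_diff_def)
    have l1: "0 \<le> ?P x z1" "?P x z1 \<le> 1" by (simp_all add: Ptr_nonneg Ptr_le1)
    have z2x: "0 \<le> z2 x" "z2 x \<le> 1" using z(2) by (auto simp: Iset_def)
    have ll: "\<bar>?P x z1 - ?P x z2\<bar> \<le> K * ?d" by (rule lipP[OF t z])
    have a1: "\<bar>(z1 x - z2 x) * ?P x z1\<bar> \<le> ?d * 1"
      unfolding abs_mult using l1 d by (intro mult_mono) (auto simp: linf_nonneg)
    have a2: "\<bar>z2 x * (?P x z1 - ?P x z2)\<bar> \<le> 1 * (K * ?d)"
      unfolding abs_mult using z2x ll by (intro mult_mono) auto
    show "\<bar>z1 x * ?P x z1 - z2 x * ?P x z2\<bar> \<le> (1 + K) * ?d"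
      unfolding e using a1 a2 abs_triangle_ineq[of "(z1 x - z2 x) * ?P x z1" "z2 x * (?P x z1 - ?P x z2)"]
      by (simp add: algebra_simps)
  qed
  also have "\<dots> = Lf * ?d" by (simp add: Lf_def)
  finally show "\<bar>(fhat f pw t z1 \<gamma> - fhat f pw t z2 \<gamma>) y\<bar> \<le> Lf * ?d" .
qed

lemma trans_conc0: assumes n: "n \<ge> 1"
  shows "measure_pmf.expectation (Pi_pmf {..<n} undefined (\<lambda>_. pw t))
    (\<lambda>ws. linf (mfield n (\<lambda>i. if i < n then f t (xs i) (\<gamma> (xs i)) (ws i) m else undefined)
       - (\<lambda>y. \<Sum>x\<in>UNIV. mfield n xs x * Ptr f pw t x (\<gamma> x) m y))) \<le> real CARD('x) / sqrt (real n)"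
proof -
  let ?\<phi> = "\<lambda>i w. f t (xs i) (\<gamma> (xs i)) w m"
  have eq: "mfield n (\<lambda>i. if i < n then f t (xs i) (\<gamma> (xs i)) (ws i) m else undefined)
       - (\<lambda>y. \<Sum>x\<in>UNIV. mfield n xs x * Ptr f pw t x (\<gamma> x) m y) =
     (\<lambda>y. real (card {i\<in>{..<n}. ?\<phi> i (ws i) = y}) / real n
        - (\<Sum>i<n. measure_pmf.expectation ((\<lambda>_. pw t) i) (\<lambda>w. if ?\<phi> i w = y then 1 else 0)) / real n)" for ws
  proof
    fix y
    have c: "{i\<in>{..<n}. (if i < n then f t (xs i) (\<gamma> (xs i)) (ws i) m else undefined) = y}
           = {i\<in>{..<n}. ?\<phi> i (ws i) = y}" by auto
    have mm: "(\<Sum>i<n. measure_pmf.expectation (pw t) (\<lambda>w. if ?\<phi> i w = y then 1 else 0)) / real n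
        = (\<Sum>x\<in>UNIV. mfield n xs x * Ptr f pw t x (\<gamma> x) m y)"
      unfolding Ptr_exp
      using mfield_avg[where h="\<lambda>x. Ptr f pw t x (\<gamma> x) m y" and n=n and xs=xs] by simp
    show "(mfield n (\<lambda>i. if i < n then f t (xs i) (\<gamma> (xs i)) (ws i) m else undefined)
       - (\<lambda>y. \<Sum>x\<in>UNIV. mfield n xs x * Ptr f pw t x (\<gamma> x) m y)) y
        = real (card {i\<in>{..<n}. ?\<phi> i (ws i) = y}) / real n
        - (\<Sum>i<n. measure_pmf.expectation ((\<lambda>_. pw t) i) (\<lambda>w. if ?\<phi> i w = y then 1 else 0)) / real n"
      using mm c by (simp add: fun_diff_def mfield_def[of n "\<lambda>i. if i < n then f t (xs i) (\<gamma> (xs i)) (ws i) m else undefined"])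
  qed
  show ?thesis unfolding eq by (rule conc_emp[OF n])
qed

lemma trans_conc: assumes n: "n \<ge> 1"
  shows "measure_pmf.expectation (Pi_pmf {..<n} undefined (\<lambda>_. pw t))
    (\<lambda>ws. linf (mfield n (\<lambda>i. if i < n then f t (xs i) (\<gamma> (xs i)) (ws i) (mfield n xs) else undefined)
       - fhat f pw t (mfield n xs) \<gamma>)) \<le> real CARD('x) / sqrt (real n)"
  using trans_conc0[OF n, of t xs \<gamma> "mfield n xs"] unfolding fhat_def .

lemma init_conc: assumes n: "n \<ge> 1"
  shows "measure_pmf.expectation (Pi_pmf {..<n} undefined (\<lambda>_. p1))
    (\<lambda>xs. linf (mfield n xs - pmf p1)) \<le> real CARD('x) / sqrt (real n)"
proof -
  have eq: "mfield n xs - pmf p1 =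
     (\<lambda>y. real (card {i\<in>{..<n}. xs i = y}) / real n
        - (\<Sum>i<n. measure_pmf.expectation ((\<lambda>_. p1) i) (\<lambda>w. if w = y then 1 else 0)) / real n)" for xs
    using n by (auto simp: fun_diff_def mfield_def pmf_exp)
  show ?thesis unfolding eq using conc_emp[OF n, of undefined "\<lambda>_. p1" "\<lambda>i w. w"] by simp
qed

end



lemma exp_abs_bd: fixes F :: "'a \<Rightarrow> real"
  assumes "\<And>x. \<bar>F x\<bar> \<le> Bd" shows "\<bar>measure_pmf.expectation p F\<bar> \<le> Bd"
proof -
  have "measure_pmf.expectation p F \<le> Bd" by (rule exp_le_const[OF _ assms]) (use assms in \<open>simp add: abs_le_iff\<close>)
  moreover have "- Bd \<le> measure_pmf.expectation p F"
  proof (rule exp_ge_const[OF _ assms])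
    fix x show "- Bd \<le> F x" using assms[of x] abs_le_iff[of "F x" Bd] by linarith
  qed
  ultimately show ?thesis by simp
qed

lemma sdist_Suc_exp: fixes F :: "(nat \<Rightarrow> 'x) \<Rightarrow> real"
  assumes "\<And>ys. \<bar>F ys\<bar> \<le> Bd"
  shows "measure_pmf.expectation (sdist n p1 pw f g (Suc k)) F =
    measure_pmf.expectation (sdist n p1 pw f g k) (\<lambda>xs.
      measure_pmf.expectation (Pi_pmf {..<n} undefined (\<lambda>_. pw (Suc k)))
       (\<lambda>ws. F (\<lambda>i. if i < n then f (Suc k) (xs i) (g (Suc k) (xs i) (mfield n xs)) (ws i) (mfield n xs)
                   else undefined)))"
  by (simp only: sdist.simps exp_bind_bdd[OF assms] integral_map_pmf)

lemma Jcost_eq: "Jcost T n p1 pw f l g = (\<Sum>t\<in>{1..T}. measure_pmf.expectation (sdist n p1 pw f g (t - 1))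
    (\<lambda>xs. chat l t (mfield n xs) (\<lambda>x. g t x (mfield n xs))))"
  unfolding Jcost_def
proof (intro sum.cong refl arg_cong[where f="measure_pmf.expectation _"] ext)
  fix t xs
  show "1 / real n * (\<Sum>i<n. l t (xs i) (g t (xs i) (mfield n xs)) (mfield n xs)) =
        chat l t (mfield n xs) (\<lambda>x. g t x (mfield n xs))"
    using mfield_avg[where h="\<lambda>x. l t x (g t x (mfield n xs)) (mfield n xs)" and n=n and xs=xs]
    by (simp add: chat_def)
qed

lemma Jcost_nonneg: assumes "\<And>t x u z. 0 \<le> l t x u z" shows "0 \<le> Jcost T n p1 pw f l g"
  unfolding Jcost_def
  by (intro sum_nonneg Bochner_Integration.integral_nonneg mult_nonneg_nonneg) (auto intro: assms)

locale mfn = mf T p1 pw f l K B for T p1 pw f l K B +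
  fixes n :: nat and Q :: "('x::finite \<Rightarrow> real) \<Rightarrow> ('x \<Rightarrow> real)" and V :: "nat \<Rightarrow> ('x \<Rightarrow> real) \<Rightarrow> real"
    and \<psi> :: "nat \<Rightarrow> ('x \<Rightarrow> real) \<Rightarrow> ('x \<Rightarrow> 'u::finite)" and zh :: "nat \<Rightarrow> ('x \<Rightarrow> real)"
  assumes n1: "n \<ge> 1"
  and hQ: "\<forall>z. Q z \<in> Qn n \<and> (\<forall>z'\<in>Qn n. linf (z - Q z) \<le> linf (z - z'))"
  and hVT: "\<forall>z\<in>Qn n. V (T + 1) z = 0"
  and hV: "\<forall>t\<in>{1..T}. \<forall>z\<in>Qn n.
            V t z = (MIN \<gamma>. chat l t z \<gamma> + V (t + 1) (Q (fhat f pw t z \<gamma>)))"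
  and hpsi: "\<forall>t\<in>{1..T}. \<forall>z\<in>Qn n. \<forall>\<gamma>.
            chat l t z (\<psi> t z) + V (t + 1) (Q (fhat f pw t z (\<psi> t z)))
              \<le> chat l t z \<gamma> + V (t + 1) (Q (fhat f pw t z \<gamma>))"
  and hz1: "zh 1 = Q (pmf p1)"
  and hzs: "\<forall>t\<ge>1. zh (t + 1) = Q (fhat f pw t (zh t) (\<psi> t (zh t)))"
begin

lemma Q_in: "Q z \<in> Qn n" using hQ by blast
lemma Q_opt: "m \<in> Qn n \<Longrightarrow> linf (z - Q z) \<le> linf (z - m)" using hQ by blast
lemma Q_close: assumes "m \<in> Qn n" shows "linf (Q z - m) \<le> 2 * linf (z - m)"
proof -
  have "linf (Q z - m) \<le> linf (Q z - z) + linf (z - m)" by (rule linf_tri)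
  also have "linf (Q z - z) = linf (z - Q z)" by (rule linf_sym)
  finally have "linf (Q z - m) \<le> linf (z - Q z) + linf (z - m)" .
  with Q_opt[OF assms, of z] show ?thesis by linarith
qed

lemma QIset: "Q z \<in> Iset" using Q_in Qn_Iset n1 by blast
lemma mIset: "mfield n xs \<in> Iset" using mfield_Iset n1 by blast

lemma V_le: assumes t: "t \<in> {1..T}" and z: "z \<in> Qn n"
  shows "V t z \<le> chat l t z \<gamma> + V (t + 1) (Q (fhat f pw t z \<gamma>))"
proof -
  have "V t z = (MIN \<gamma>. chat l t z \<gamma> + V (t + 1) (Q (fhat f pw t z \<gamma>)))" using hV t z by blast
  also have "\<dots> \<le> chat l t z \<gamma> + V (t + 1) (Q (fhat f pw t z \<gamma>))" by (rule Min_le) auto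
  finally show ?thesis .
qed

lemma V_psi: assumes t: "t \<in> {1..T}" and z: "z \<in> Qn n"
  shows "V t z = chat l t z (\<psi> t z) + V (t + 1) (Q (fhat f pw t z (\<psi> t z)))"
proof -
  have "V t z = (MIN \<gamma>. chat l t z \<gamma> + V (t + 1) (Q (fhat f pw t z \<gamma>)))" using hV t z by blast
  also have "\<dots> = chat l t z (\<psi> t z) + V (t + 1) (Q (fhat f pw t z (\<psi> t z)))"
    by (rule Min_eqI) (use hpsi t z in auto)
  finally show ?thesis .
qed

lemma V_bd0: "k \<le> T \<Longrightarrow> z \<in> Qn n \<Longrightarrow> 0 \<le> V (T + 1 - k) z \<and> V (T + 1 - k) z \<le> real k * real CARD('x) * B"
proof (induction k arbitrary: z)
  case 0
  then show ?case using hVT by simp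
next
  case (Suc k)
  define t where "t = T - k"
  have t: "t \<in> {1..T}" using Suc.prems by (auto simp: t_def)
  have e1: "T + 1 - Suc k = t" "t + 1 = T + 1 - k" using Suc.prems by (auto simp: t_def)
  have zI: "z \<in> Iset" using Qn_Iset n1 Suc.prems by blast
  have IH0: "0 \<le> V (T + 1 - k) (Q (fhat f pw t z (\<psi> t z))) \<and> V (T + 1 - k) (Q (fhat f pw t z (\<psi> t z))) \<le> real k * real CARD('x) * B"
    using Suc.IH[OF _ Q_in] Suc.prems by simp
  have IH: "0 \<le> V (t + 1) (Q (fhat f pw t z (\<psi> t z))) \<and> V (t + 1) (Q (fhat f pw t z (\<psi> t z))) \<le> real k * real CARD('x) * B"
    using IH0[unfolded e1(2)[symmetric]] .
  have V: "V t z = chat l t z (\<psi> t z) + V (t + 1) (Q (fhat f pw t z (\<psi> t z)))"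
    by (rule V_psi[OF t Suc.prems(2)])
  show ?case unfolding e1(1) V using IH chat_bd[OF t zI, of "\<psi> t z"] by (simp add: algebra_simps)
qed

definition "Vb = real (T + 1) * real CARD('x) * B"

lemma V_abs: assumes "t \<in> {1..T+1}" "z \<in> Qn n" shows "\<bar>V t z\<bar> \<le> Vb"
proof -
  have k: "T + 1 - t \<le> T" and e: "T + 1 - (T + 1 - t) = t" using assms by auto
  have h: "0 \<le> V t z \<and> V t z \<le> real (T + 1 - t) * real CARD('x) * B"
    using V_bd0[OF k assms(2)] unfolding e .
  have "real (T + 1 - t) * real CARD('x) * B \<le> Vb"
    unfolding Vb_def using Bnn by (intro mult_right_mono) auto
  then show ?thesis using h by simp
qed

lemma linf_mf_bd: "linf (mfield n ys - fhat f pw t z \<gamma>) \<le> 1 + real CARD('x)" if "z \<in> Iset"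
proof (rule linf_le)
  fix y
  have "0 \<le> mfield n ys y" "mfield n ys y \<le> 1" using mIset[of ys] by (auto simp: Iset_def)
  then show "\<bar>(mfield n ys - fhat f pw t z \<gamma>) y\<bar> \<le> 1 + real CARD('x)"
    using fhat_bd[OF that, of t \<gamma> y] by (simp add: fun_diff_def abs_le_iff)
qed

lemma sample_exists: "\<exists>xs'. linf (mfield n xs' - fhat f pw t (mfield n xs) \<gamma>) \<le> real CARD('x) / sqrt (real n)"
proof -
  have bd: "\<bar>linf (mfield n (\<lambda>i. if i < n then f t (xs i) (\<gamma> (xs i)) (ws i) (mfield n xs) else undefined)
       - fhat f pw t (mfield n xs) \<gamma>)\<bar> \<le> 1 + real CARD('x)" for ws
    by (simp only: abs_of_nonneg[OF linf_nonneg]) (rule linf_mf_bd[OF mIset])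
  obtain ws where "linf (mfield n (\<lambda>i. if i < n then f t (xs i) (\<gamma> (xs i)) (ws i) (mfield n xs) else undefined)
       - fhat f pw t (mfield n xs) \<gamma>) \<le> real CARD('x) / sqrt (real n)"
    using exists_le_exp[OF bd trans_conc[OF n1, of t xs \<gamma>]] by blast
  then show ?thesis by blast
qed

end



context mfn begin

lemma V_lip_step:
  assumes t: "t \<in> {1..T}" and L'nn: "0 \<le> L'"
    and IH: "\<And>a xs. a \<in> Qn n \<Longrightarrow> \<bar>V (t + 1) a - V (t + 1) (mfield n xs)\<bar> \<le> L' * linf (a - mfield n xs) + E' / sqrt (real n)"
    and a: "a \<in> Qn n"
  shows "\<bar>V t a - V t (mfield n xs)\<bar> \<le> (Lc + 2 * Lf * L') * linf (a - mfield n xs)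
           + (4 * real CARD('x) * L' + 2 * E') / sqrt (real n)"
proof -
  define b where "b = mfield n xs"
  define d where "d = linf (a - b)"
  define s where "s = sqrt (real n)"
  define \<delta> where "\<delta> = real CARD('x) / s"
  have aI: "a \<in> Iset" using a Qn_Iset n1 by blast
  have bI: "b \<in> Iset" unfolding b_def by (rule mIset)
  have bQ: "b \<in> Qn n" unfolding b_def by (rule mfield_Qn)
  have G: "\<bar>V (t + 1) (Q (fhat f pw t a \<gamma>)) - V (t + 1) (Q (fhat f pw t b \<gamma>))\<bar>
           \<le> 2 * Lf * L' * d + 4 * L' * \<delta> + 2 * (E' / s)" for \<gamma>
  proof -
    define fa where "fa = fhat f pw t a \<gamma>"
    define fb where "fb = fhat f pw t b \<gamma>"
    obtain xs'' where xs'': "linf (mfield n xs'' - fb) \<le> \<delta>"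
      using sample_exists[where xs=xs and t=t and \<gamma>=\<gamma>] unfolding fb_def b_def \<delta>_def s_def by blast
    define b'' where "b'' = mfield n xs''"
    have b''Q: "b'' \<in> Qn n" unfolding b''_def by (rule mfield_Qn)
    have h1: "\<bar>V (t + 1) (Q fa) - V (t + 1) b''\<bar> \<le> L' * linf (Q fa - b'') + E' / s"
      unfolding b''_def s_def by (rule IH[OF Q_in])
    have h2: "\<bar>V (t + 1) (Q fb) - V (t + 1) b''\<bar> \<le> L' * linf (Q fb - b'') + E' / s"
      unfolding b''_def s_def by (rule IH[OF Q_in])
    have fbb: "linf (fb - b'') \<le> \<delta>" using xs'' linf_sym[of fb b''] unfolding b''_def by simp
    have h3: "linf (Q fb - b'') \<le> 2 * \<delta>" using Q_close[OF b''Q, of fb] fbb by linarith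
    have fab: "linf (fa - fb) \<le> Lf * d" unfolding fa_def fb_def d_def by (rule fhat_lip[OF t aI bI])
    have "linf (fa - b'') \<le> linf (fa - fb) + linf (fb - b'')" by (rule linf_tri)
    then have h4: "linf (Q fa - b'') \<le> 2 * Lf * d + 2 * \<delta>"
      using Q_close[OF b''Q, of fa] fab fbb by linarith
    have h5: "L' * linf (Q fb - b'') \<le> L' * (2 * \<delta>)" by (rule mult_left_mono[OF h3 L'nn])
    have h6: "L' * linf (Q fa - b'') \<le> L' * (2 * Lf * d + 2 * \<delta>)" by (rule mult_left_mono[OF h4 L'nn])
    have e1: "L' * (2 * \<delta>) = 2 * L' * \<delta>" "L' * (2 * Lf * d + 2 * \<delta>) = 2 * Lf * L' * d + 2 * L' * \<delta>"
      by (simp_all add: algebra_simps)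
    show ?thesis unfolding fa_def[symmetric] fb_def[symmetric] using h1 h2 h5 h6 e1 by linarith
  qed
  have cl: "\<bar>chat l t a \<gamma> - chat l t b \<gamma>\<bar> \<le> Lc * d" for \<gamma>
    unfolding d_def by (rule chat_lip[OF t aI bI])
  have u1: "V t a \<le> chat l t a (\<psi> t b) + V (t + 1) (Q (fhat f pw t a (\<psi> t b)))" by (rule V_le[OF t a])
  have u2: "V t b = chat l t b (\<psi> t b) + V (t + 1) (Q (fhat f pw t b (\<psi> t b)))" by (rule V_psi[OF t bQ])
  have l1: "V t b \<le> chat l t b (\<psi> t a) + V (t + 1) (Q (fhat f pw t b (\<psi> t a)))" by (rule V_le[OF t bQ])
  have l2: "V t a = chat l t a (\<psi> t a) + V (t + 1) (Q (fhat f pw t a (\<psi> t a)))" by (rule V_psi[OF t a])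
  have main: "\<bar>V t a - V t b\<bar> \<le> Lc * d + (2 * Lf * L' * d + 4 * L' * \<delta> + 2 * (E' / s))"
    using u1 u2 l1 l2 cl[of "\<psi> t a"] cl[of "\<psi> t b"] G[of "\<psi> t a"] G[of "\<psi> t b"]
    by (simp add: abs_le_iff)
  have sp: "s > 0" unfolding s_def using n1 by simp
  have eq: "Lc * d + (2 * Lf * L' * d + 4 * L' * \<delta> + 2 * (E' / s)) =
        (Lc + 2 * Lf * L') * d + (4 * real CARD('x) * L' + 2 * E') / s"
    using sp unfolding \<delta>_def by (simp add: field_simps)
  have "\<bar>V t a - V t b\<bar> \<le> (Lc + 2 * Lf * L') * d + (4 * real CARD('x) * L' + 2 * E') / s"
    using main eq by linarith
  then show ?thesis unfolding b_def d_def s_def .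
qed

lemma V_lip0: "k \<le> T \<Longrightarrow> a \<in> Qn n \<Longrightarrow> \<bar>V (T + 1 - k) a - V (T + 1 - k) (mfield n xs)\<bar>
   \<le> Lk Lc Lf k * linf (a - mfield n xs) + Ek Lc Lf (real CARD('x)) k / sqrt (real n)"
proof (induction k arbitrary: a xs)
  case 0
  then show ?case using hVT mfield_Qn[of n xs] by simp
next
  case (Suc k)
  define t where "t = T - k"
  have t: "t \<in> {1..T}" using Suc.prems by (auto simp: t_def)
  have e1: "T + 1 - Suc k = t" "T + 1 - k = t + 1" using Suc.prems by (auto simp: t_def)
  have IH: "\<bar>V (t + 1) a' - V (t + 1) (mfield n xs')\<bar>
     \<le> Lk Lc Lf k * linf (a' - mfield n xs') + Ek Lc Lf (real CARD('x)) k / sqrt (real n)"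
    if "a' \<in> Qn n" for a' xs'
  proof -
    have kT: "k \<le> T" using Suc.prems(1) by simp
    show ?thesis by (rule Suc.IH[OF kT that, unfolded e1(2)])
  qed
  show ?case unfolding e1(1) Lk.simps Ek.simps
    by (rule V_lip_step[OF t Lk_nonneg[OF Lc_nn Lf_nn] IH Suc.prems(2)])
qed

end



context mf begin
definition "err t = (2 * real CARD('x) * Lk Lc Lf (T - t) + Ek Lc Lf (real CARD('x)) (T - t))"
definition "C1 = (2 * real CARD('x) * Lk Lc Lf T + Ek Lc Lf (real CARD('x)) T) + (\<Sum>t\<in>{1..T}. err t)"
end

context mfn begin

lemma V_lip: assumes t: "t \<in> {1..T+1}" and a: "a \<in> Qn n"
  shows "\<bar>V t a - V t (mfield n xs)\<bar> \<le> Lk Lc Lf (T + 1 - t) * linf (a - mfield n xs)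
     + Ek Lc Lf (real CARD('x)) (T + 1 - t) / sqrt (real n)"
proof -
  have k: "T + 1 - t \<le> T" and e: "T + 1 - (T + 1 - t) = t" using t by auto
  show ?thesis using V_lip0[OF k a, of xs] unfolding e .
qed

lemma Vm_bd: "t \<in> {1..T+1} \<Longrightarrow> \<bar>V t (mfield n ys)\<bar> \<le> Vb"
  using V_abs mfield_Qn by blast

lemma lower_step: assumes t: "t \<in> {1..T}"
  shows "measure_pmf.expectation (sdist n p1 pw f g (t - 1)) (\<lambda>xs. V t (mfield n xs))
    \<le> measure_pmf.expectation (sdist n p1 pw f g (t - 1)) (\<lambda>xs. chat l t (mfield n xs) (\<lambda>x. g t x (mfield n xs)))
     + measure_pmf.expectation (sdist n p1 pw f g t) (\<lambda>xs. V (t + 1) (mfield n xs)) + err t / sqrt (real n)"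
proof -
  obtain k where tk: "t = Suc k" using t by (cases t) auto
  have km: "t - 1 = k" using tk by simp
  define s where "s = sqrt (real n)"
  have sp: "s > 0" unfolding s_def using n1 by simp
  define L' where "L' = Lk Lc Lf (T - t)"
  define E' where "E' = Ek Lc Lf (real CARD('x)) (T - t)"
  have L'nn: "0 \<le> L'" unfolding L'_def by (rule Lk_nonneg[OF Lc_nn Lf_nn])
  have t1: "t + 1 \<in> {1..T+1}" using t by simp
  have ee: "T + 1 - (t + 1) = T - t" by simp
  have VL: "\<bar>V (t + 1) a - V (t + 1) (mfield n ys)\<bar> \<le> L' * linf (a - mfield n ys) + E' / s"
    if "a \<in> Qn n" for a ys
    using V_lip[OF t1 that, of ys] unfolding ee L'_def E'_def s_def .
  define new where "new xs ws = (\<lambda>i. if i < n then f t (xs i) (g t (xs i) (mfield n xs)) (ws i) (mfield n xs) else undefined)"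
    for xs ws
  define P where "P = Pi_pmf {..<n} undefined (\<lambda>_. pw t)"
  have Vbd: "\<bar>V (t + 1) (mfield n ys)\<bar> \<le> Vb" for ys by (rule Vm_bd[OF t1])
  have tI: "t \<in> {1..T+1}" using t by simp
  have S: "measure_pmf.expectation (sdist n p1 pw f g t) (\<lambda>xs. V (t + 1) (mfield n xs)) =
     measure_pmf.expectation (sdist n p1 pw f g k) (\<lambda>xs. measure_pmf.expectation P (\<lambda>ws. V (t + 1) (mfield n (new xs ws))))"
    unfolding P_def new_def tk by (rule sdist_Suc_exp[OF Vbd[unfolded tk]])
  have lbd: "\<bar>linf (mfield n (new xs ws) - fhat f pw t (mfield n xs) \<gamma>)\<bar> \<le> 1 + real CARD('x)" for xs ws \<gamma>
    by (simp only: abs_of_nonneg[OF linf_nonneg]) (rule linf_mf_bd[OF mIset])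
  have pw: "V t (mfield n xs) \<le> chat l t (mfield n xs) (\<lambda>x. g t x (mfield n xs))
      + measure_pmf.expectation P (\<lambda>ws. V (t + 1) (mfield n (new xs ws))) + err t / s" for xs
  proof -
    define m where "m = mfield n xs"
    define \<gamma> where "\<gamma> = (\<lambda>x. g t x m)"
    define w where "w = fhat f pw t m \<gamma>"
    have mQ: "m \<in> Qn n" unfolding m_def by (rule mfield_Qn)
    have p1: "V t m \<le> chat l t m \<gamma> + V (t + 1) (Q w)" unfolding w_def by (rule V_le[OF t mQ])
    have p2: "V (t + 1) (Q w) \<le> V (t + 1) (mfield n (new xs ws)) + 2 * L' * linf (mfield n (new xs ws) - w) + E' / s" for ws
    proof -
      have a: "V (t + 1) (Q w) - V (t + 1) (mfield n (new xs ws)) \<le> L' * linf (Q w - mfield n (new xs ws)) + E' / s"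
        using VL[OF Q_in, of w "new xs ws"] by simp
      have b: "linf (Q w - mfield n (new xs ws)) \<le> 2 * linf (mfield n (new xs ws) - w)"
        using Q_close[OF mfield_Qn[of n "new xs ws"], of w] linf_sym[of w "mfield n (new xs ws)"] by simp
      have c: "L' * linf (Q w - mfield n (new xs ws)) \<le> L' * (2 * linf (mfield n (new xs ws) - w))"
        by (rule mult_left_mono[OF b L'nn])
      show ?thesis using a c by simp
    qed
    have i1: "integrable P (\<lambda>ws. V (t + 1) (mfield n (new xs ws)))" by (rule int_bdd[OF Vbd])
    have i2: "integrable P (\<lambda>ws. linf (mfield n (new xs ws) - w))"
      unfolding w_def m_def by (rule int_bdd[OF lbd])
    have p3: "V (t + 1) (Q w) \<le> measure_pmf.expectation P (\<lambda>ws. V (t + 1) (mfield n (new xs ws))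
        + 2 * L' * linf (mfield n (new xs ws) - w) + E' / s)"
    proof (rule exp_ge_const[OF p2])
      fix ws
      have "\<bar>V (t + 1) (mfield n (new xs ws)) + 2 * L' * linf (mfield n (new xs ws) - w) + E' / s\<bar>
         \<le> \<bar>V (t + 1) (mfield n (new xs ws))\<bar> + \<bar>2 * L' * linf (mfield n (new xs ws) - w)\<bar> + \<bar>E' / s\<bar>"
        by linarith
      also have "\<dots> \<le> Vb + 2 * L' * (1 + real CARD('x)) + \<bar>E' / s\<bar>"
      proof -
        have h: "2 * L' * linf (mfield n (new xs ws) - w) \<le> 2 * L' * (1 + real CARD('x))"
          using mult_left_mono[OF lbd[of xs ws \<gamma>, unfolded abs_of_nonneg[OF linf_nonneg]], of "2 * L'"] L'nn
          unfolding w_def m_def by simp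
        have h2: "\<bar>2 * L' * linf (mfield n (new xs ws) - w)\<bar> = 2 * L' * linf (mfield n (new xs ws) - w)"
          by (intro abs_of_nonneg mult_nonneg_nonneg) (simp_all add: L'nn linf_nonneg)
        show ?thesis using h h2 Vbd[of "new xs ws"] by linarith
      qed
      finally show "\<bar>V (t + 1) (mfield n (new xs ws)) + 2 * L' * linf (mfield n (new xs ws) - w) + E' / s\<bar>
         \<le> Vb + 2 * L' * (1 + real CARD('x)) + \<bar>E' / s\<bar>" .
    qed
    also have "\<dots> = measure_pmf.expectation P (\<lambda>ws. V (t + 1) (mfield n (new xs ws)))
        + 2 * L' * measure_pmf.expectation P (\<lambda>ws. linf (mfield n (new xs ws) - w)) + E' / s"
      using i1 i2 by simp
    also have "\<dots> \<le> measure_pmf.expectation P (\<lambda>ws. V (t + 1) (mfield n (new xs ws)))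
        + 2 * L' * (real CARD('x) / s) + E' / s"
    proof -
      have "measure_pmf.expectation P (\<lambda>ws. linf (mfield n (new xs ws) - w)) \<le> real CARD('x) / s"
        unfolding P_def new_def w_def s_def \<gamma>_def m_def by (rule trans_conc[OF n1])
      then have "2 * L' * measure_pmf.expectation P (\<lambda>ws. linf (mfield n (new xs ws) - w)) \<le> 2 * L' * (real CARD('x) / s)"
        by (rule mult_left_mono) (simp add: L'nn)
      then show ?thesis by linarith
    qed
    finally have p4: "V (t + 1) (Q w) \<le> measure_pmf.expectation P (\<lambda>ws. V (t + 1) (mfield n (new xs ws)))
        + 2 * L' * (real CARD('x) / s) + E' / s" .
    have "2 * L' * (real CARD('x) / s) + E' / s = err t / s"
      unfolding err_def L'_def E'_def using sp by (simp add: field_simps)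
    then show ?thesis using p1 p4 unfolding m_def \<gamma>_def by linarith
  qed
  have cbd: "\<bar>chat l t (mfield n xs) (\<lambda>x. g t x (mfield n xs))\<bar> \<le> real CARD('x) * B" for xs
    using chat_bd[OF t mIset] by simp
  have ebd: "\<bar>measure_pmf.expectation P (\<lambda>ws. V (t + 1) (mfield n (new xs ws)))\<bar> \<le> Vb" for xs
    by (rule exp_abs_bd[OF Vbd])
  have "measure_pmf.expectation (sdist n p1 pw f g k) (\<lambda>xs. V t (mfield n xs))
    \<le> measure_pmf.expectation (sdist n p1 pw f g k) (\<lambda>xs. chat l t (mfield n xs) (\<lambda>x. g t x (mfield n xs))
      + measure_pmf.expectation P (\<lambda>ws. V (t + 1) (mfield n (new xs ws))) + err t / s)"
  proof (rule integral_mono)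
    show "integrable (sdist n p1 pw f g k) (\<lambda>xs. V t (mfield n xs))" by (rule int_bdd[OF Vm_bd[OF tI]])
    show "integrable (sdist n p1 pw f g k) (\<lambda>xs. chat l t (mfield n xs) (\<lambda>x. g t x (mfield n xs))
      + measure_pmf.expectation P (\<lambda>ws. V (t + 1) (mfield n (new xs ws))) + err t / s)"
      by (intro Bochner_Integration.integrable_add int_bdd[OF cbd] int_bdd[OF ebd]) simp
  qed (rule pw)
  also have "\<dots> = measure_pmf.expectation (sdist n p1 pw f g k) (\<lambda>xs. chat l t (mfield n xs) (\<lambda>x. g t x (mfield n xs)))
      + measure_pmf.expectation (sdist n p1 pw f g k) (\<lambda>xs. measure_pmf.expectation P (\<lambda>ws. V (t + 1) (mfield n (new xs ws))))
      + err t / s"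
  proof -
    have ic: "integrable (sdist n p1 pw f g k) (\<lambda>xs. chat l t (mfield n xs) (\<lambda>x. g t x (mfield n xs)))"
      by (rule int_bdd[OF cbd])
    have ie: "integrable (sdist n p1 pw f g k) (\<lambda>xs. measure_pmf.expectation P (\<lambda>ws. V (t + 1) (mfield n (new xs ws))))"
      by (rule int_bdd[OF ebd])
    show ?thesis using ic ie by simp
  qed
  finally show ?thesis unfolding km S s_def .
qed

end



context mf begin
definition "C2 = (\<Sum>t\<in>{1..T}. Lc * Dk (real CARD('x)) Lf (t - 1))"
end

context mfn begin

lemma tele: "j \<le> T \<Longrightarrow>
  measure_pmf.expectation (sdist n p1 pw f g 0) (\<lambda>xs. V 1 (mfield n xs))
   \<le> (\<Sum>t\<in>{1..j}. measure_pmf.expectation (sdist n p1 pw f g (t - 1))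
           (\<lambda>xs. chat l t (mfield n xs) (\<lambda>x. g t x (mfield n xs))) + err t / sqrt (real n))
     + measure_pmf.expectation (sdist n p1 pw f g j) (\<lambda>xs. V (j + 1) (mfield n xs))"
proof (induction j)
  case 0
  then show ?case by simp
next
  case (Suc j)
  have t: "Suc j \<in> {1..T}" using Suc.prems by simp
  have st: "measure_pmf.expectation (sdist n p1 pw f g j) (\<lambda>xs. V (Suc j) (mfield n xs))
    \<le> measure_pmf.expectation (sdist n p1 pw f g j) (\<lambda>xs. chat l (Suc j) (mfield n xs) (\<lambda>x. g (Suc j) x (mfield n xs)))
     + measure_pmf.expectation (sdist n p1 pw f g (Suc j)) (\<lambda>xs. V (Suc j + 1) (mfield n xs)) + err (Suc j) / sqrt (real n)"
    using lower_step[OF t, of g] by simp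
  have IH: "measure_pmf.expectation (sdist n p1 pw f g 0) (\<lambda>xs. V 1 (mfield n xs))
   \<le> (\<Sum>t\<in>{1..j}. measure_pmf.expectation (sdist n p1 pw f g (t - 1))
           (\<lambda>xs. chat l t (mfield n xs) (\<lambda>x. g t x (mfield n xs))) + err t / sqrt (real n))
     + measure_pmf.expectation (sdist n p1 pw f g j) (\<lambda>xs. V (Suc j) (mfield n xs))"
    using Suc.IH Suc.prems by simp
  show ?case using IH st by simp
qed

lemma p1_Iset: "pmf p1 \<in> Iset" by (auto simp: Iset_def pmf_le_1)

lemma lower: "V 1 (zh 1) \<le> Jcost T n p1 pw f l g + C1 / sqrt (real n)"
proof -
  define s where "s = sqrt (real n)"
  have sp: "s > 0" unfolding s_def using n1 by simp
  define P0 where "P0 = sdist n p1 pw f g 0"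
  have P0': "P0 = Pi_pmf {..<n} undefined (\<lambda>_. p1)" by (simp add: P0_def)
  have t1: "1 \<in> {1..T+1}" by simp
  have LT: "0 \<le> Lk Lc Lf T" by (rule Lk_nonneg[OF Lc_nn Lf_nn])
  have pw: "V 1 (zh 1) \<le> V 1 (mfield n xs) + 2 * Lk Lc Lf T * linf (mfield n xs - pmf p1)
      + Ek Lc Lf (real CARD('x)) T / s" for xs
  proof -
    have a: "V 1 (Q (pmf p1)) - V 1 (mfield n xs) \<le> Lk Lc Lf T * linf (Q (pmf p1) - mfield n xs)
       + Ek Lc Lf (real CARD('x)) T / s"
      using V_lip[OF t1 Q_in, of "pmf p1" xs] unfolding s_def by simp
    have b: "linf (Q (pmf p1) - mfield n xs) \<le> 2 * linf (mfield n xs - pmf p1)"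
      using Q_close[OF mfield_Qn[of n xs], of "pmf p1"] linf_sym[of "pmf p1" "mfield n xs"] by simp
    have c: "Lk Lc Lf T * linf (Q (pmf p1) - mfield n xs) \<le> Lk Lc Lf T * (2 * linf (mfield n xs - pmf p1))"
      by (rule mult_left_mono[OF b LT])
    show ?thesis using a c hz1 by simp
  qed
  have lb: "\<bar>linf (mfield n xs - pmf p1)\<bar> \<le> 1" for xs
    by (simp only: abs_of_nonneg[OF linf_nonneg]) (rule linf_Iset[OF mIset p1_Iset])
  have vb: "\<bar>V 1 (mfield n xs)\<bar> \<le> Vb" for xs by (rule Vm_bd[OF t1])
  have i1: "integrable P0 (\<lambda>xs. V 1 (mfield n xs))" by (rule int_bdd[OF vb])
  have i2: "integrable P0 (\<lambda>xs. linf (mfield n xs - pmf p1))" by (rule int_bdd[OF lb])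
  have "V 1 (zh 1) \<le> measure_pmf.expectation P0 (\<lambda>xs. V 1 (mfield n xs) + 2 * Lk Lc Lf T * linf (mfield n xs - pmf p1)
      + Ek Lc Lf (real CARD('x)) T / s)"
  proof (rule exp_ge_const[OF pw])
    fix xs
    have h: "\<bar>2 * Lk Lc Lf T * linf (mfield n xs - pmf p1)\<bar> \<le> 2 * Lk Lc Lf T * 1"
    proof -
      have "\<bar>2 * Lk Lc Lf T * linf (mfield n xs - pmf p1)\<bar> = 2 * Lk Lc Lf T * \<bar>linf (mfield n xs - pmf p1)\<bar>"
        using LT by (simp add: abs_mult)
      also have "\<dots> \<le> 2 * Lk Lc Lf T * 1" by (rule mult_left_mono[OF lb]) (simp add: LT)
      finally show ?thesis .
    qed
    show "\<bar>V 1 (mfield n xs) + 2 * Lk Lc Lf T * linf (mfield n xs - pmf p1) + Ek Lc Lf (real CARD('x)) T / s\<bar>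
        \<le> Vb + 2 * Lk Lc Lf T * 1 + \<bar>Ek Lc Lf (real CARD('x)) T / s\<bar>"
      using h vb[of xs] by linarith
  qed
  also have "\<dots> = measure_pmf.expectation P0 (\<lambda>xs. V 1 (mfield n xs))
      + 2 * Lk Lc Lf T * measure_pmf.expectation P0 (\<lambda>xs. linf (mfield n xs - pmf p1))
      + Ek Lc Lf (real CARD('x)) T / s"
    using i1 i2 by simp
  also have "\<dots> \<le> measure_pmf.expectation P0 (\<lambda>xs. V 1 (mfield n xs))
      + 2 * Lk Lc Lf T * (real CARD('x) / s) + Ek Lc Lf (real CARD('x)) T / s"
  proof -
    have "measure_pmf.expectation P0 (\<lambda>xs. linf (mfield n xs - pmf p1)) \<le> real CARD('x) / s"
      unfolding P0' s_def by (rule init_conc[OF n1])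
    then have "2 * Lk Lc Lf T * measure_pmf.expectation P0 (\<lambda>xs. linf (mfield n xs - pmf p1))
        \<le> 2 * Lk Lc Lf T * (real CARD('x) / s)" by (rule mult_left_mono) (simp add: LT)
    then show ?thesis by linarith
  qed
  finally have init: "V 1 (zh 1) \<le> measure_pmf.expectation P0 (\<lambda>xs. V 1 (mfield n xs))
      + 2 * Lk Lc Lf T * (real CARD('x) / s) + Ek Lc Lf (real CARD('x)) T / s" .
  have T0: "measure_pmf.expectation (sdist n p1 pw f g T) (\<lambda>xs. V (T + 1) (mfield n xs)) = 0"
  proof -
    have "(\<lambda>xs. V (T + 1) (mfield n xs)) = (\<lambda>_. 0)" using hVT mfield_Qn by blast
    then show ?thesis by simp
  qed
  have te: "measure_pmf.expectation P0 (\<lambda>xs. V 1 (mfield n xs))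
   \<le> (\<Sum>t\<in>{1..T}. measure_pmf.expectation (sdist n p1 pw f g (t - 1))
           (\<lambda>xs. chat l t (mfield n xs) (\<lambda>x. g t x (mfield n xs))) + err t / s)"
    using tele[of T g] T0 unfolding P0_def s_def by simp
  have "(\<Sum>t\<in>{1..T}. measure_pmf.expectation (sdist n p1 pw f g (t - 1))
           (\<lambda>xs. chat l t (mfield n xs) (\<lambda>x. g t x (mfield n xs))) + err t / s)
      = Jcost T n p1 pw f l g + (\<Sum>t\<in>{1..T}. err t) / s"
    by (simp add: Jcost_eq sum.distrib sum_divide_distrib)
  moreover have "C1 / s = (2 * Lk Lc Lf T * (real CARD('x) / s) + Ek Lc Lf (real CARD('x)) T / s) + (\<Sum>t\<in>{1..T}. err t) / s"
    unfolding C1_def using sp by (simp add: field_simps)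
  ultimately show ?thesis using init te unfolding s_def by linarith
qed

end



context mfn begin

lemma zh_Qn: assumes "t \<ge> 1" shows "zh t \<in> Qn n"
proof -
  obtain s where ts: "t = Suc s" using assms by (cases t) auto
  show ?thesis
  proof (cases "s = 0")
    case True then show ?thesis using ts hz1 Q_in by simp
  next
    case False
    then have "zh (s + 1) = Q (fhat f pw s (zh s) (\<psi> s (zh s)))" using hzs by simp
    then show ?thesis using ts Q_in by simp
  qed
qed

lemma V_zh: "j \<le> T \<Longrightarrow> V 1 (zh 1) = (\<Sum>t\<in>{1..j}. chat l t (zh t) (\<psi> t (zh t))) + V (j + 1) (zh (j + 1))"
proof (induction j)
  case 0 then show ?case by simp
next
  case (Suc j)
  have t: "Suc j \<in> {1..T}" using Suc.prems by simp
  have "V (Suc j) (zh (Suc j)) = chat l (Suc j) (zh (Suc j)) (\<psi> (Suc j) (zh (Suc j)))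
     + V (Suc j + 1) (Q (fhat f pw (Suc j) (zh (Suc j)) (\<psi> (Suc j) (zh (Suc j)))))"
    by (rule V_psi[OF t zh_Qn]) simp
  also have "Q (fhat f pw (Suc j) (zh (Suc j)) (\<psi> (Suc j) (zh (Suc j)))) = zh (Suc j + 1)"
    using hzs by simp
  finally show ?case using Suc.IH Suc.prems by simp
qed

lemma D_bound: "k \<le> T \<Longrightarrow>
  measure_pmf.expectation (sdist n p1 pw f (\<lambda>t x m. \<psi> t (zh t) x) k) (\<lambda>xs. linf (mfield n xs - zh (Suc k)))
    \<le> Dk (real CARD('x)) Lf k / sqrt (real n)"
proof (induction k)
  case 0
  have pw: "linf (mfield n xs - zh (Suc 0)) \<le> 2 * linf (mfield n xs - pmf p1)" for xs
    using Q_close[OF mfield_Qn[of n xs], of "pmf p1"] linf_sym[of "Q (pmf p1)" "mfield n xs"]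
      linf_sym[of "pmf p1" "mfield n xs"] hz1 by simp
  have lb: "\<bar>linf (mfield n xs - pmf p1)\<bar> \<le> 1" for xs
    by (simp only: abs_of_nonneg[OF linf_nonneg]) (rule linf_Iset[OF mIset p1_Iset])
  have lb2: "\<bar>linf (mfield n xs - zh (Suc 0))\<bar> \<le> 1" for xs
    by (simp only: abs_of_nonneg[OF linf_nonneg]) (rule linf_Iset[OF mIset Qn_Iset[OF n1 zh_Qn]], simp)
  have "measure_pmf.expectation (Pi_pmf {..<n} undefined (\<lambda>_. p1)) (\<lambda>xs. linf (mfield n xs - zh (Suc 0)))
     \<le> measure_pmf.expectation (Pi_pmf {..<n} undefined (\<lambda>_. p1)) (\<lambda>xs. 2 * linf (mfield n xs - pmf p1))"
    by (rule integral_mono[OF int_bdd[OF lb2] _ pw]) (simp add: int_bdd[OF lb])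
  also have "\<dots> \<le> 2 * (real CARD('x) / sqrt (real n))"
    using init_conc[OF n1] by simp
  finally have r: "measure_pmf.expectation (Pi_pmf {..<n} undefined (\<lambda>_. p1)) (\<lambda>xs. linf (mfield n xs - zh (Suc 0)))
     \<le> 2 * (real CARD('x) / sqrt (real n))" .
  have "2 * (real CARD('x) / sqrt (real n)) = Dk (real CARD('x)) Lf 0 / sqrt (real n)" by simp
  then show ?case unfolding sdist.simps(1) using r by linarith
next
  case (Suc k)
  define t where "t = Suc k"
  have t: "t \<in> {1..T}" using Suc.prems by (simp add: t_def)
  define \<gamma> where "\<gamma> = \<psi> t (zh t)"
  define s where "s = sqrt (real n)"
  define P where "P = Pi_pmf {..<n} undefined (\<lambda>_. pw t)"
  define new where "new xs ws = (\<lambda>i. if i < n then f t (xs i) (\<gamma> (xs i)) (ws i) (mfield n xs) else undefined)" for xs ws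
  have zt: "zh t \<in> Iset" using Qn_Iset[OF n1 zh_Qn] t by simp
  have zt1: "zh (Suc t) \<in> Iset" using Qn_Iset[OF n1 zh_Qn] by simp
  have zs: "zh (Suc t) = Q (fhat f pw t (zh t) \<gamma>)" using hzs t unfolding \<gamma>_def by simp
  have lb: "\<bar>linf (mfield n ys - zh (Suc t))\<bar> \<le> 1" for ys
    by (simp only: abs_of_nonneg[OF linf_nonneg]) (rule linf_Iset[OF mIset zt1])
  have S: "measure_pmf.expectation (sdist n p1 pw f (\<lambda>t x m. \<psi> t (zh t) x) t) (\<lambda>xs. linf (mfield n xs - zh (Suc t)))
     = measure_pmf.expectation (sdist n p1 pw f (\<lambda>t x m. \<psi> t (zh t) x) k)
        (\<lambda>xs. measure_pmf.expectation P (\<lambda>ws. linf (mfield n (new xs ws) - zh (Suc t))))"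
    unfolding P_def new_def t_def \<gamma>_def by (rule sdist_Suc_exp[OF lb[unfolded t_def]])
  have lb1: "\<bar>linf (mfield n (new xs ws) - fhat f pw t (mfield n xs) \<gamma>)\<bar> \<le> 1 + real CARD('x)" for xs ws
    by (simp only: abs_of_nonneg[OF linf_nonneg]) (rule linf_mf_bd[OF mIset])
  have lb0: "\<bar>linf (mfield n xs - zh t)\<bar> \<le> 1" for xs
    by (simp only: abs_of_nonneg[OF linf_nonneg]) (rule linf_Iset[OF mIset zt])
  have inner: "measure_pmf.expectation P (\<lambda>ws. linf (mfield n (new xs ws) - zh (Suc t)))
      \<le> 2 * Lf * linf (mfield n xs - zh t) + 2 * (real CARD('x) / s)" for xs
  proof -
    define m where "m = mfield n xs"
    have pw: "linf (mfield n (new xs ws) - zh (Suc t))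
        \<le> 2 * Lf * linf (mfield n xs - zh t) + 2 * linf (mfield n (new xs ws) - fhat f pw t (mfield n xs) \<gamma>)" for ws
    proof -
      define m' where "m' = mfield n (new xs ws)"
      have a: "linf (Q (fhat f pw t (zh t) \<gamma>) - m') \<le> 2 * linf (fhat f pw t (zh t) \<gamma> - m')"
        unfolding m'_def by (rule Q_close[OF mfield_Qn])
      have b: "linf (fhat f pw t (zh t) \<gamma> - m') \<le> linf (fhat f pw t (zh t) \<gamma> - fhat f pw t m \<gamma>) + linf (fhat f pw t m \<gamma> - m')"
        by (rule linf_tri)
      have c: "linf (fhat f pw t (zh t) \<gamma> - fhat f pw t m \<gamma>) \<le> Lf * linf (zh t - m)"
        unfolding m_def by (rule fhat_lip[OF t zt mIset])
      have d: "linf (zh t - m) = linf (m - zh t)" by (rule linf_sym)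
      have e: "linf (fhat f pw t m \<gamma> - m') = linf (m' - fhat f pw t m \<gamma>)" by (rule linf_sym)
      have g: "linf (m' - Q (fhat f pw t (zh t) \<gamma>)) = linf (Q (fhat f pw t (zh t) \<gamma>) - m')" by (rule linf_sym)
      have "Lf * linf (zh t - m) = Lf * linf (m - zh t)" using d by simp
      then show ?thesis using a b c e g unfolding zs m'_def[symmetric] m_def[symmetric] by linarith
    qed
    have i1: "integrable P (\<lambda>ws. linf (mfield n (new xs ws) - zh (Suc t)))" by (rule int_bdd[OF lb])
    have i2: "integrable P (\<lambda>ws. linf (mfield n (new xs ws) - fhat f pw t (mfield n xs) \<gamma>))" by (rule int_bdd[OF lb1])
    have "measure_pmf.expectation P (\<lambda>ws. linf (mfield n (new xs ws) - zh (Suc t)))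
        \<le> measure_pmf.expectation P (\<lambda>ws. 2 * Lf * linf (mfield n xs - zh t)
             + 2 * linf (mfield n (new xs ws) - fhat f pw t (mfield n xs) \<gamma>))"
      by (rule integral_mono[OF i1 _ pw]) (simp add: i2)
    also have "\<dots> = 2 * Lf * linf (mfield n xs - zh t)
        + 2 * measure_pmf.expectation P (\<lambda>ws. linf (mfield n (new xs ws) - fhat f pw t (mfield n xs) \<gamma>))"
      using i2 by simp
    also have "\<dots> \<le> 2 * Lf * linf (mfield n xs - zh t) + 2 * (real CARD('x) / s)"
    proof -
      have "measure_pmf.expectation P (\<lambda>ws. linf (mfield n (new xs ws) - fhat f pw t (mfield n xs) \<gamma>))
         \<le> real CARD('x) / s"
        unfolding P_def new_def s_def by (rule trans_conc[OF n1])
      then show ?thesis by simp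
    qed
    finally show ?thesis .
  qed
  have ib: "\<bar>measure_pmf.expectation P (\<lambda>ws. linf (mfield n (new xs ws) - zh (Suc t)))\<bar> \<le> 1" for xs
    by (rule exp_abs_bd[OF lb])
  have "measure_pmf.expectation (sdist n p1 pw f (\<lambda>t x m. \<psi> t (zh t) x) k)
        (\<lambda>xs. measure_pmf.expectation P (\<lambda>ws. linf (mfield n (new xs ws) - zh (Suc t))))
     \<le> measure_pmf.expectation (sdist n p1 pw f (\<lambda>t x m. \<psi> t (zh t) x) k)
        (\<lambda>xs. 2 * Lf * linf (mfield n xs - zh t) + 2 * (real CARD('x) / s))"
    by (rule integral_mono[OF int_bdd[OF ib] _ inner]) (simp add: int_bdd[OF lb0])
  also have "\<dots> = 2 * Lf * measure_pmf.expectation (sdist n p1 pw f (\<lambda>t x m. \<psi> t (zh t) x) k)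
        (\<lambda>xs. linf (mfield n xs - zh t)) + 2 * (real CARD('x) / s)"
  proof -
    have "integrable (sdist n p1 pw f (\<lambda>t x m. \<psi> t (zh t) x) k) (\<lambda>xs. linf (mfield n xs - zh t))"
      by (rule int_bdd[OF lb0])
    then show ?thesis by simp
  qed
  also have "\<dots> \<le> 2 * Lf * (Dk (real CARD('x)) Lf k / s) + 2 * (real CARD('x) / s)"
  proof -
    have "measure_pmf.expectation (sdist n p1 pw f (\<lambda>t x m. \<psi> t (zh t) x) k) (\<lambda>xs. linf (mfield n xs - zh t))
       \<le> Dk (real CARD('x)) Lf k / s"
    proof -
      have kT: "k \<le> T" using Suc.prems by simp
      show ?thesis using Suc.IH[OF kT] unfolding t_def s_def .
    qed
    then have "2 * Lf * measure_pmf.expectation (sdist n p1 pw f (\<lambda>t x m. \<psi> t (zh t) x) k) (\<lambda>xs. linf (mfield n xs - zh t))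
       \<le> 2 * Lf * (Dk (real CARD('x)) Lf k / s)" by (rule mult_left_mono) (simp add: Lf_nn)
    then show ?thesis by linarith
  qed
  also have "\<dots> = Dk (real CARD('x)) Lf (Suc k) / s"
  proof -
    have "s > 0" unfolding s_def using n1 by simp
    then show ?thesis by (simp add: field_simps)
  qed
  finally have r: "measure_pmf.expectation (sdist n p1 pw f (\<lambda>t x m. \<psi> t (zh t) x) k)
        (\<lambda>xs. measure_pmf.expectation P (\<lambda>ws. linf (mfield n (new xs ws) - zh (Suc t))))
     \<le> Dk (real CARD('x)) Lf (Suc k) / s" .
  have "measure_pmf.expectation (sdist n p1 pw f (\<lambda>t x m. \<psi> t (zh t) x) t) (\<lambda>xs. linf (mfield n xs - zh (Suc t)))
     \<le> Dk (real CARD('x)) Lf (Suc k) / s" unfolding S by (rule r)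
  then show ?case unfolding t_def s_def .
qed

lemma upper: "Jcost T n p1 pw f l (\<lambda>t x m. \<psi> t (zh t) x) \<le> V 1 (zh 1) + C2 / sqrt (real n)"
proof -
  define s where "s = sqrt (real n)"
  have sp: "s > 0" unfolding s_def using n1 by simp
  have J: "Jcost T n p1 pw f l (\<lambda>t x m. \<psi> t (zh t) x) = (\<Sum>t\<in>{1..T}.
     measure_pmf.expectation (sdist n p1 pw f (\<lambda>t x m. \<psi> t (zh t) x) (t - 1)) (\<lambda>xs. chat l t (mfield n xs) (\<psi> t (zh t))))"
    by (simp add: Jcost_eq)
  have each: "measure_pmf.expectation (sdist n p1 pw f (\<lambda>t x m. \<psi> t (zh t) x) (t - 1)) (\<lambda>xs. chat l t (mfield n xs) (\<psi> t (zh t)))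
     \<le> chat l t (zh t) (\<psi> t (zh t)) + Lc * Dk (real CARD('x)) Lf (t - 1) / s" if t: "t \<in> {1..T}" for t
  proof -
    define P where "P = sdist n p1 pw f (\<lambda>t x m. \<psi> t (zh t) x) (t - 1)"
    have zt: "zh t \<in> Iset" using Qn_Iset[OF n1 zh_Qn] t by simp
    have pw: "chat l t (mfield n xs) (\<psi> t (zh t)) \<le> chat l t (zh t) (\<psi> t (zh t)) + Lc * linf (mfield n xs - zh t)" for xs
      using chat_lip[OF t mIset zt, of xs "\<psi> t (zh t)"] by (simp add: abs_le_iff)
    have cb: "\<bar>chat l t (mfield n xs) (\<psi> t (zh t))\<bar> \<le> real CARD('x) * B" for xs
      using chat_bd[OF t mIset] by simp
    have lb0: "\<bar>linf (mfield n xs - zh t)\<bar> \<le> 1" for xs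
      by (simp only: abs_of_nonneg[OF linf_nonneg]) (rule linf_Iset[OF mIset zt])
    have il: "integrable P (\<lambda>xs. linf (mfield n xs - zh t))" by (rule int_bdd[OF lb0])
    have "measure_pmf.expectation P (\<lambda>xs. chat l t (mfield n xs) (\<psi> t (zh t)))
       \<le> measure_pmf.expectation P (\<lambda>xs. chat l t (zh t) (\<psi> t (zh t)) + Lc * linf (mfield n xs - zh t))"
      by (rule integral_mono[OF int_bdd[OF cb] _ pw]) (simp add: il)
    also have "\<dots> = chat l t (zh t) (\<psi> t (zh t)) + Lc * measure_pmf.expectation P (\<lambda>xs. linf (mfield n xs - zh t))"
      using il by simp
    also have "\<dots> \<le> chat l t (zh t) (\<psi> t (zh t)) + Lc * (Dk (real CARD('x)) Lf (t - 1) / s)"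
    proof -
      have k: "t - 1 \<le> T" and e: "Suc (t - 1) = t" using t by auto
      have "measure_pmf.expectation P (\<lambda>xs. linf (mfield n xs - zh t)) \<le> Dk (real CARD('x)) Lf (t - 1) / s"
        using D_bound[OF k] unfolding e P_def s_def .
      then have "Lc * measure_pmf.expectation P (\<lambda>xs. linf (mfield n xs - zh t)) \<le> Lc * (Dk (real CARD('x)) Lf (t - 1) / s)"
        by (rule mult_left_mono) (simp add: Lc_nn)
      then show ?thesis by linarith
    qed
    finally show ?thesis unfolding P_def by simp
  qed
  have "Jcost T n p1 pw f l (\<lambda>t x m. \<psi> t (zh t) x) \<le>
        (\<Sum>t\<in>{1..T}. chat l t (zh t) (\<psi> t (zh t)) + Lc * Dk (real CARD('x)) Lf (t - 1) / s)"
    unfolding J by (rule sum_mono) (rule each, simp)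
  also have "\<dots> = (\<Sum>t\<in>{1..T}. chat l t (zh t) (\<psi> t (zh t))) + C2 / s"
    unfolding C2_def by (simp add: sum.distrib sum_divide_distrib)
  also have "(\<Sum>t\<in>{1..T}. chat l t (zh t) (\<psi> t (zh t))) = V 1 (zh 1)"
    using V_zh[of T] hVT zh_Qn[of "T + 1"] by simp
  finally show ?thesis unfolding s_def .
qed

end



lemma unif_const:
  assumes "finite A" "\<forall>t\<in>A. \<exists>K>0. P t K" "\<And>t K K'. P t K \<Longrightarrow> K \<le> K' \<Longrightarrow> P t K'"
  shows "\<exists>K>(0::real). \<forall>t\<in>A. P t K"
proof -
  obtain Kf where Kf: "\<forall>t\<in>A. Kf t > 0 \<and> P t (Kf t)" using bchoice[OF assms(2)] by auto
  define K where "K = 1 + (\<Sum>t\<in>A. Kf t)"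
  have "Kf t \<le> K" if "t \<in> A" for t
  proof -
    have "Kf t \<le> (\<Sum>t\<in>A. Kf t)" by (rule member_le_sum) (use Kf that assms(1) in \<open>auto simp: less_imp_le\<close>)
    then show ?thesis unfolding K_def by simp
  qed
  moreover have "K > 0" unfolding K_def using Kf by (simp add: add_pos_nonneg sum_nonneg less_imp_le)
  ultimately show ?thesis using Kf assms(3) by blast
qed

theorem corollary1:
  fixes T :: nat
    and p1 :: "'x::finite pmf"
    and pw :: "nat \<Rightarrow> 'w::finite pmf"
    and f :: "nat \<Rightarrow> 'x \<Rightarrow> 'u::finite \<Rightarrow> 'w \<Rightarrow> ('x \<Rightarrow> real) \<Rightarrow> 'x"
    and l :: "nat \<Rightarrow> 'x \<Rightarrow> 'u \<Rightarrow> ('x \<Rightarrow> real) \<Rightarrow> real"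
  assumes cost_nonneg: "\<And>t x u z. 0 \<le> l t x u z"
    and lip_P: "\<forall>t\<in>{1..T}. \<exists>K1>0. \<forall>x y u. \<forall>z1\<in>Iset. \<forall>z2\<in>Iset.
                 \<bar>Ptr f pw t x u z1 y - Ptr f pw t x u z2 y\<bar> \<le> K1 * linf (z1 - z2)"
    and lip_l: "\<forall>t\<in>{1..T}. \<exists>K2>0. \<forall>x u. \<forall>z1\<in>Iset. \<forall>z2\<in>Iset.
                 \<bar>l t x u z1 - l t x u z2\<bar> \<le> K2 * linf (z1 - z2)"
  shows "\<exists>C. \<forall>n::nat. n \<ge> 1 \<longrightarrow>
     (\<forall>(Q :: ('x \<Rightarrow> real) \<Rightarrow> ('x \<Rightarrow> real)) (V :: nat \<Rightarrow> ('x \<Rightarrow> real) \<Rightarrow> real)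
        (\<psi> :: nat \<Rightarrow> ('x \<Rightarrow> real) \<Rightarrow> ('x \<Rightarrow> 'u)) (zh :: nat \<Rightarrow> ('x \<Rightarrow> real)).
        (\<forall>z. Q z \<in> Qn n \<and> (\<forall>z'\<in>Qn n. linf (z - Q z) \<le> linf (z - z'))) \<and>
        (\<forall>z\<in>Qn n. V (T + 1) z = 0) \<and>
        (\<forall>t\<in>{1..T}. \<forall>z\<in>Qn n.
            V t z = (MIN \<gamma>. chat l t z \<gamma> + V (t + 1) (Q (fhat f pw t z \<gamma>)))) \<and>
        (\<forall>t\<in>{1..T}. \<forall>z\<in>Qn n. \<forall>\<gamma>.
            chat l t z (\<psi> t z) + V (t + 1) (Q (fhat f pw t z (\<psi> t z)))
              \<le> chat l t z \<gamma> + V (t + 1) (Q (fhat f pw t z \<gamma>))) \<and>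
        zh 1 = Q (pmf p1) \<and>
        (\<forall>t\<ge>1. zh (t + 1) = Q (fhat f pw t (zh t) (\<psi> t (zh t))))
      \<longrightarrow> \<bar>Jcost T n p1 pw f l (\<lambda>t x m. \<psi> t (zh t) x) - Jstar T n p1 pw f l\<bar>
            \<le> C / sqrt (real n))"
proof -
  have mono1: "\<And>t K K'. (\<forall>x y u. \<forall>z1\<in>Iset. \<forall>z2\<in>Iset.
                 \<bar>Ptr f pw t x u z1 y - Ptr f pw t x u z2 y\<bar> \<le> K * linf (z1 - z2)) \<Longrightarrow> K \<le> K' \<Longrightarrow>
              (\<forall>x y u. \<forall>z1\<in>Iset. \<forall>z2\<in>Iset.
                 \<bar>Ptr f pw t x u z1 y - Ptr f pw t x u z2 y\<bar> \<le> K' * linf (z1 - z2))"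
    by (meson linf_nonneg mult_right_mono order_trans)
  have mono2: "\<And>t K K'. (\<forall>x u. \<forall>z1\<in>Iset. \<forall>z2\<in>Iset.
                 \<bar>l t x u z1 - l t x u z2\<bar> \<le> K * linf (z1 - z2)) \<Longrightarrow> K \<le> K' \<Longrightarrow>
              (\<forall>x u. \<forall>z1\<in>Iset. \<forall>z2\<in>Iset.
                 \<bar>l t x u z1 - l t x u z2\<bar> \<le> K' * linf (z1 - z2))"
    by (meson linf_nonneg mult_right_mono order_trans)
  have ex1: "\<exists>K>0. \<forall>t\<in>{1..T}. \<forall>x y u. \<forall>z1\<in>Iset. \<forall>z2\<in>Iset.
                 \<bar>Ptr f pw t x u z1 y - Ptr f pw t x u z2 y\<bar> \<le> K * linf (z1 - z2)"
    by (rule unif_const[where P="\<lambda>t K. \<forall>x y u. \<forall>z1\<in>Iset. \<forall>z2\<in>Iset.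
                 \<bar>Ptr f pw t x u z1 y - Ptr f pw t x u z2 y\<bar> \<le> K * linf (z1 - z2)"])
       (rule finite_atLeastAtMost, rule lip_P, rule mono1, assumption, assumption)
  then obtain K1 where K1: "K1 > 0" "\<forall>t\<in>{1..T}. \<forall>x y u. \<forall>z1\<in>Iset. \<forall>z2\<in>Iset.
                 \<bar>Ptr f pw t x u z1 y - Ptr f pw t x u z2 y\<bar> \<le> K1 * linf (z1 - z2)" by blast
  have ex2: "\<exists>K>0. \<forall>t\<in>{1..T}. \<forall>x u. \<forall>z1\<in>Iset. \<forall>z2\<in>Iset.
                 \<bar>l t x u z1 - l t x u z2\<bar> \<le> K * linf (z1 - z2)"
    by (rule unif_const[where P="\<lambda>t K. \<forall>x u. \<forall>z1\<in>Iset. \<forall>z2\<in>Iset.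
                 \<bar>l t x u z1 - l t x u z2\<bar> \<le> K * linf (z1 - z2)"])
       (rule finite_atLeastAtMost, rule lip_l, rule mono2, assumption, assumption)
  then obtain K2 where K2: "K2 > 0" "\<forall>t\<in>{1..T}. \<forall>x u. \<forall>z1\<in>Iset. \<forall>z2\<in>Iset.
                 \<bar>l t x u z1 - l t x u z2\<bar> \<le> K2 * linf (z1 - z2)" by blast
  define K where "K = K1 + K2"
  define B where "B = (\<Sum>t\<in>{1..T}. \<Sum>x\<in>UNIV. \<Sum>u\<in>UNIV. l t x u (\<lambda>_. 0)) + K"
  have Kpos: "K > 0" using K1 K2 by (simp add: K_def)
  have z0: "(\<lambda>_. 0) \<in> Iset" by (simp add: Iset_def)
  have lipP: "\<bar>Ptr f pw t x u z1 y - Ptr f pw t x u z2 y\<bar> \<le> K * linf (z1 - z2)"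
    if "t \<in> {1..T}" "z1 \<in> Iset" "z2 \<in> Iset" for t x y u z1 z2
    using mono1[of t K1 K] K1 K2 that unfolding K_def by auto
  have lipl: "\<bar>l t x u z1 - l t x u z2\<bar> \<le> K * linf (z1 - z2)"
    if "t \<in> {1..T}" "z1 \<in> Iset" "z2 \<in> Iset" for t x u z1 z2
    using mono2[of t K2 K] K1 K2 that unfolding K_def by auto
  have lB: "l t x u z \<le> B" if t: "t \<in> {1..T}" and z: "z \<in> Iset" for t x u z
  proof -
    have "l t x u z - l t x u (\<lambda>_. 0) \<le> K * linf (z - (\<lambda>_. 0))" using lipl[OF t z z0, of x u] abs_le_iff by linarith
    also have "\<dots> \<le> K * 1" by (rule mult_left_mono[OF linf_Iset[OF z z0]]) (use Kpos in simp)
    finally have a: "l t x u z \<le> l t x u (\<lambda>_. 0) + K" by simp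
    have "l t x u (\<lambda>_. 0) \<le> (\<Sum>u\<in>UNIV. l t x u (\<lambda>_. 0))"
      by (rule member_le_sum) (auto intro: cost_nonneg)
    also have "\<dots> \<le> (\<Sum>x\<in>UNIV. \<Sum>u\<in>UNIV. l t x u (\<lambda>_. 0))"
      by (rule member_le_sum[where f="\<lambda>x. \<Sum>u\<in>UNIV. l t x u (\<lambda>_. 0)"]) (auto intro: sum_nonneg cost_nonneg)
    also have "\<dots> \<le> (\<Sum>t\<in>{1..T}. \<Sum>x\<in>UNIV. \<Sum>u\<in>UNIV. l t x u (\<lambda>_. 0))"
      by (rule member_le_sum[where f="\<lambda>t. \<Sum>x\<in>UNIV. \<Sum>u\<in>UNIV. l t x u (\<lambda>_. 0)"])
         (use t in \<open>auto intro: sum_nonneg cost_nonneg\<close>)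
    finally show ?thesis using a unfolding B_def by simp
  qed
  have Bnn: "B \<ge> 0" unfolding B_def using Kpos by (auto intro!: add_nonneg_nonneg sum_nonneg cost_nonneg)
  have mfT: "mf T pw f l K B"
    by (unfold_locales) (use Kpos Bnn cost_nonneg lipP lipl lB in auto)
  interpret M: mf T p1 pw f l K B by (rule mfT)
  show ?thesis
  proof (intro exI[of _ "M.C1 + M.C2"] allI impI)
    fix n :: nat and Q :: "('x \<Rightarrow> real) \<Rightarrow> ('x \<Rightarrow> real)" and V :: "nat \<Rightarrow> ('x \<Rightarrow> real) \<Rightarrow> real"
      and \<psi> :: "nat \<Rightarrow> ('x \<Rightarrow> real) \<Rightarrow> ('x \<Rightarrow> 'u)" and zh :: "nat \<Rightarrow> ('x \<Rightarrow> real)"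
    assume n: "n \<ge> 1"
    assume H: "(\<forall>z. Q z \<in> Qn n \<and> (\<forall>z'\<in>Qn n. linf (z - Q z) \<le> linf (z - z'))) \<and>
        (\<forall>z\<in>Qn n. V (T + 1) z = 0) \<and>
        (\<forall>t\<in>{1..T}. \<forall>z\<in>Qn n.
            V t z = (MIN \<gamma>. chat l t z \<gamma> + V (t + 1) (Q (fhat f pw t z \<gamma>)))) \<and>
        (\<forall>t\<in>{1..T}. \<forall>z\<in>Qn n. \<forall>\<gamma>.
            chat l t z (\<psi> t z) + V (t + 1) (Q (fhat f pw t z (\<psi> t z)))
              \<le> chat l t z \<gamma> + V (t + 1) (Q (fhat f pw t z \<gamma>))) \<and>
        zh 1 = Q (pmf p1) \<and>
        (\<forall>t\<ge>1. zh (t + 1) = Q (fhat f pw t (zh t) (\<psi> t (zh t))))"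
    interpret N: mfn T p1 pw f l K B n Q V \<psi> zh
      by (intro mfn.intro mfT mfn_axioms.intro) (use n H in auto)
    define s where "s = sqrt (real n)"
    have up: "Jcost T n p1 pw f l (\<lambda>t x m. \<psi> t (zh t) x) \<le> V 1 (zh 1) + M.C2 / s"
      unfolding s_def by (rule N.upper)
    have bdd: "bdd_below (range (Jcost T n p1 pw f l))"
      by (rule bdd_belowI[of _ 0]) (auto intro: Jcost_nonneg cost_nonneg)
    have js1: "Jstar T n p1 pw f l \<le> Jcost T n p1 pw f l (\<lambda>t x m. \<psi> t (zh t) x)"
      unfolding Jstar_def by (rule cINF_lower[OF bdd]) simp
    have js2: "V 1 (zh 1) - M.C1 / s \<le> Jstar T n p1 pw f l"
      unfolding Jstar_def
    proof (rule cINF_greatest)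
      fix g
      show "V 1 (zh 1) - M.C1 / s \<le> Jcost T n p1 pw f l g" using N.lower[of g] unfolding s_def by simp
    qed simp
    have "(M.C1 + M.C2) / s = M.C1 / s + M.C2 / s" by (simp add: add_divide_distrib)
    then show "\<bar>Jcost T n p1 pw f l (\<lambda>t x m. \<psi> t (zh t) x) - Jstar T n p1 pw f l\<bar> \<le> (M.C1 + M.C2) / sqrt (real n)"
      using up js1 js2 unfolding s_def by simp
  qed
qed



end
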